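(* Let $A, B$ be $2n\times 2n$ real symmetric positive semidefinite matrices whose kernels are symplectic subspaces of $\mathbb{R}^{2n}$. If $d(A) \prec d(B)$, then there exist real symplectic matrices $M_\pi \in \operatorname{Sp}(2n)$, indexed by $\pi \in S_n$, and a probability vector $(p(\pi))_{\pi\in S_n}$ (non-negative entries summing to $1$) such that $$A = \sum_{\pi \in S_n} p(\pi)\, M_\pi^T B M_\pi .$$ In particular, $A$ lies in the convex hull of the symplectic orbit $\{M^TBM : M \in \operatorname{Sp}(2n)\}$ of $B$.
   Context: Let $J = \begin{bmatrix} 0 & I_n \\ -I_n & 0\end{bmatrix}$. A real $2n\times 2n$ matrix $M$ is symplectic if $M^TJM = J$; $\operatorname{Sp}(2n)$ denotes the group of such matrices. A linear subspace $W\subseteq\mathbb{R}^{2n}$ is symplectic if for every $0\neq u\in W$ there is $v\in W$ with $u^TJv\neq 0$. For a real symmetric positive semidefinite $2n\times 2n$ matrix $A$ whose kernel is a symplectic subspace, there is $M\in\operatorname{Sp}(2n)$ with $M^TAM = D\oplus D$ where $D$ is an $n\times n$ diagonal matrix with non-negative entries, unique up to permutation of its diagonal entries (generalized Williamson theorem); these diagonal entries are the symplectic eigenvalues of $A$, and $d(A) = (d_1(A),\dots,d_n(A))$ denotes them arranged in non-decreasing order. $S_n$ is the symmetric group on $\{1,\dots,n\}$. For $x\in\mathbb{R}^n$, $x^\uparrow$ denotes $x$ with entries rearranged in non-decreasing order. For $x,y\in\mathbb{R}^n$, $x\prec y$ ($x$ is majorized by $y$) means $\sum_{j=1}^k x^\uparrow_j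 \ge \sum_{j=1}^k y^\uparrow_j$ for $1\le k\le n$, with equality for $k=n$. *)

theory Defs
  imports "HOL-Analysis.Analysis" "HOL-Library.Multiset" "HOL-Combinatorics.Permutations"
begin

text \<open>Index set of R^{2n}: the disjoint union 'n + 'n, with n = CARD('n).
  Coordinates Inl i are the first n coordinates, Inr i the last n.\<close>

type_synonym 'n sqmat = "real ^ ('n + 'n) ^ ('n + 'n)"
type_synonym 'n vec2 = "real ^ ('n + 'n)"

definition J_mat :: "('n::finite) sqmat" where
  "J_mat = (\<chi> a b. case (a, b) of
      (Inl i, Inr j) \<Rightarrow> (if i = j then 1 else 0)
    | (Inr i, Inl j) \<Rightarrow> (if i = j then -1 else 0)
    | _ \<Rightarrow> 0)"

definition symplectic :: "('n::finite) sqmat \<Rightarrow> bool" where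
  "symplectic M \<longleftrightarrow> transpose M ** J_mat ** M = J_mat"

definition symplectic_subspace :: "('n::finite) vec2 set \<Rightarrow> bool" where
  "symplectic_subspace W \<longleftrightarrow> subspace W \<and>
     (\<forall>u\<in>W. u \<noteq> 0 \<longrightarrow> (\<exists>v\<in>W. u \<bullet> (J_mat *v v) \<noteq> 0))"

definition psd_sym :: "('n::finite) sqmat \<Rightarrow> bool" where
  "psd_sym A \<longleftrightarrow> transpose A = A \<and> (\<forall>x. 0 \<le> x \<bullet> (A *v x))"

definition kernel_mat :: "('n::finite) sqmat \<Rightarrow> ('n vec2) set" where
  "kernel_mat A = {x. A *v x = 0}"

definition diag2 :: "real ^ ('n::finite) \<Rightarrow> 'n sqmat" where
  "diag2 D = (\<chi> a b. if a = b then (case a of Inl i \<Rightarrow> D $ i | Inr i \<Rightarrow> D $ i) else 0)"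

definition sorted_entries :: "real ^ ('n::finite) \<Rightarrow> real list" where
  "sorted_entries D = sorted_list_of_multiset (image_mset (\<lambda>i. D $ i) (mset_set UNIV))"

text \<open>Symplectic eigenvalues d(A) in non-decreasing order (well defined by the
  generalized Williamson theorem).\<close>
definition sympl_eigs :: "('n::finite) sqmat \<Rightarrow> real list" where
  "sympl_eigs A = (THE L. \<exists>M D. symplectic M \<and> (\<forall>i. 0 \<le> D $ i) \<and>
       transpose M ** A ** M = diag2 D \<and> L = sorted_entries D)"

definition majorized :: "real list \<Rightarrow> real list \<Rightarrow> bool" where
  "majorized x y \<longleftrightarrow> length x = length y \<and>
     (\<forall>k. 1 \<le> k \<and> k \<le> length x \<longrightarrow>
        sum_list (take k (sort x)) \<ge> sum_list (take k (sort y))) \<and>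
     sum_list x = sum_list y"

end

theory Submission
  imports Defs "HOL-Computational_Algebra.Polynomial"
begin

definition sf :: "('n::finite) vec2 \<Rightarrow> 'n vec2 \<Rightarrow> real" where
  "sf x y = x \<bullet> (J_mat *v y)"

lemma J_entry: "(J_mat :: ('n::finite) sqmat) $ a $ b =
   (case (a, b) of (Inl i, Inr j) \<Rightarrow> (if i = j then 1 else 0)
    | (Inr i, Inl j) \<Rightarrow> (if i = j then -1 else 0) | _ \<Rightarrow> 0)"
  unfolding J_mat_def by simp

lemma transpose_J: "transpose (J_mat :: ('n::finite) sqmat) = - J_mat"
  by (auto simp: vec_eq_iff transpose_def J_entry split: sum.splits)

lemma inner_mat_swap: "(x::real^'m::finite) \<bullet> (A *v y) = y \<bullet> (transpose A *v x)"
  by (metis dot_lmul_matrix inner_commute transpose_matrix_vector)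

lemma neg_mat_vec: "(- A) *v x = - (A *v (x::real^'m::finite))"
  by (simp add: vec_eq_iff matrix_vector_mult_def sum_negf)

lemma mat_vec_neg: "A *v (- x) = - (A *v (x::real^'m::finite))"
  by (simp add: vec_eq_iff matrix_vector_mult_def sum_negf)

lemma sf_antisym: "sf x y = - sf y x"
  unfolding sf_def by (subst inner_mat_swap) (simp add: transpose_J neg_mat_vec)

lemma sf_self[simp]: "sf x x = 0"
  using sf_antisym[of x x] by simp

lemma sf_add_left: "sf (x + y) z = sf x z + sf y z"
  by (simp add: sf_def inner_add_left)
lemma sf_add_right: "sf z (x + y) = sf z x + sf z y"
  by (simp add: sf_def inner_add_right matrix_vector_right_distrib)
lemma sf_diff_left: "sf (x - y) z = sf x z - sf y z"
  by (simp add: sf_def inner_diff_left)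
lemma sf_diff_right: "sf z (x - y) = sf z x - sf z y"
  by (simp add: sf_def inner_diff_right matrix_vector_mult_diff_distrib)
lemma sf_scale_left: "sf (c *\<^sub>R x) z = c * sf x z"
  by (simp add: sf_def)
lemma sf_scale_right: "sf z (c *\<^sub>R x) = c * sf z x"
  by (simp add: sf_def matrix_vector_mult_scaleR)
lemma sf_zero_left[simp]: "sf 0 z = 0" by (simp add: sf_def)
lemma sf_zero_right[simp]: "sf z 0 = 0" by (simp add: sf_def)
lemma sf_sum_left: "finite S \<Longrightarrow> sf (\<Sum>i\<in>S. f i) z = (\<Sum>i\<in>S. sf (f i) z)"
  by (induct S rule: finite_induct) (auto simp: sf_add_left)
lemma sf_sum_right: "finite S \<Longrightarrow> sf z (\<Sum>i\<in>S. f i) = (\<Sum>i\<in>S. sf z (f i))"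
  by (induct S rule: finite_induct) (auto simp: sf_add_right)

lemma sum_UNIV_Plus: "sum f (UNIV :: ('a::finite + 'b::finite) set) = (\<Sum>i\<in>UNIV. f (Inl i)) + (\<Sum>i\<in>UNIV. f (Inr i))"
  by (simp add: UNIV_Plus_UNIV[symmetric] sum.Plus del: UNIV_Plus_UNIV)

lemma JJ: "(J_mat :: ('n::finite) sqmat) ** J_mat = - mat 1"
proof -
  have "((J_mat :: ('n::finite) sqmat) ** J_mat) $ a $ b = (- mat 1 :: 'n sqmat) $ a $ b" for a b
    by (cases a; cases b) (simp_all add: matrix_matrix_mult_def sum_UNIV_Plus J_entry mat_def
        if_distrib[where f="\<lambda>x. x * _"] cong: if_cong)
  then show ?thesis by (simp add: vec_eq_iff)
qed

lemma sf_J: "sf z (- (J_mat *v z)) = z \<bullet> z"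
  unfolding sf_def
  by (simp add: mat_vec_neg matrix_vector_mul_assoc JJ neg_mat_vec)

lemma sf_nondeg: "z \<noteq> 0 \<Longrightarrow> sf z (- (J_mat *v z)) \<noteq> 0"
  by (simp add: sf_J)

definition colmat :: "(('n::finite) + 'n \<Rightarrow> 'n vec2) \<Rightarrow> 'n sqmat" where
  "colmat f = (\<chi> r c. f c $ r)"

lemma congr_entry: "(transpose M ** X ** M) $ a $ b = column a M \<bullet> (X *v column b M)"
  by (simp add: matrix_matrix_mult_def matrix_vector_mult_def inner_vec_def column_def
      transpose_def sum_distrib_left sum_distrib_right mult.assoc mult.left_commute)
    (subst sum.swap, simp add: mult.commute mult.left_commute)

lemma column_colmat[simp]: "column c (colmat f) = f c"
  by (simp add: column_def colmat_def vec_eq_iff)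

lemma congr_colmat: "(transpose (colmat f) ** X ** colmat f) $ a $ b = f a \<bullet> (X *v f b)"
  by (simp add: congr_entry)

lemma mat_neg_left: "(- A) ** B = - (A ** (B::real^'m::finite^'k::finite))"
  by (simp add: vec_eq_iff matrix_matrix_mult_def sum_negf)
lemma mat_neg_right: "A ** (- B) = - ((A::real^'m::finite^'k::finite) ** B)"
  by (simp add: vec_eq_iff matrix_matrix_mult_def sum_negf)
lemma transpose_neg: "transpose (- A) = - transpose (A::real^'m::finite^'k::finite)"
  by (simp add: vec_eq_iff transpose_def)

definition sinv :: "('n::finite) sqmat \<Rightarrow> 'n sqmat" where
  "sinv M = - (J_mat ** transpose M ** J_mat)"

lemma sinv_left: assumes "symplectic M" shows "sinv M ** M = mat 1"
proof -
  have "sinv M ** M = - (J_mat ** (transpose M ** J_mat ** M))"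
    by (simp add: sinv_def mat_neg_left matrix_mul_assoc)
  also have "\<dots> = mat 1" using assms by (simp add: symplectic_def JJ)
  finally show ?thesis .
qed

lemma sinv_right: "symplectic M \<Longrightarrow> M ** sinv M = mat 1"
  using sinv_left matrix_left_right_inverse by blast

lemma symplectic_mult: assumes "symplectic X" "symplectic Y" shows "symplectic (X ** Y)"
proof -
  have "transpose (X ** Y) ** J_mat ** (X ** Y) = transpose Y ** (transpose X ** J_mat ** X) ** Y"
    by (simp add: matrix_transpose_mul matrix_mul_assoc)
  then show ?thesis using assms by (simp add: symplectic_def)
qed

lemma symplectic_sinv: assumes "symplectic M" shows "symplectic (sinv M)"
proof -
  have "transpose (sinv M) ** J_mat ** sinv M
      = transpose (sinv M) ** (transpose M ** J_mat ** M) ** sinv M"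
    using assms by (simp add: symplectic_def)
  also have "\<dots> = transpose (M ** sinv M) ** J_mat ** (M ** sinv M)"
    by (simp add: matrix_transpose_mul matrix_mul_assoc)
  finally show ?thesis using assms by (simp add: symplectic_def sinv_right)
qed

lemma symplectic_J_comm: assumes "symplectic N" shows "J_mat ** transpose N = sinv N ** J_mat"
proof -
  have "sinv N ** J_mat = - (J_mat ** transpose N ** (J_mat ** J_mat))"
    by (simp add: sinv_def mat_neg_left matrix_mul_assoc)
  then show ?thesis by (simp add: JJ mat_neg_right)
qed

lemma symplectic_iff_entries:
  "symplectic M \<longleftrightarrow> (\<forall>a b. column a M \<bullet> (J_mat *v column b M) = J_mat $ a $ b)"
  unfolding symplectic_def by (simp add: vec_eq_iff congr_entry)

lemma symplectic_mat1: "symplectic (mat 1)"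
  by (simp add: symplectic_def)

definition qf :: "('n::finite) sqmat \<Rightarrow> 'n vec2 \<Rightarrow> real" where
  "qf A x = x \<bullet> (A *v x)"

lemma bf_sym: "transpose A = A \<Longrightarrow> x \<bullet> (A *v y) = y \<bullet> (A *v (x::real^'m::finite))"
  by (subst inner_mat_swap) simp

lemma qf_expand: assumes "transpose A = A"
  shows "qf A (x + t *\<^sub>R z) = qf A x + 2*t*(z \<bullet> (A *v x)) + t^2 * qf A z"
  using bf_sym[OF assms, of x z]
  by (simp add: qf_def inner_add_left inner_add_right matrix_vector_right_distrib
      matrix_vector_mult_scaleR power2_eq_square algebra_simps)

lemma qf_scale: "qf A (c *\<^sub>R x) = c^2 * qf A x"
  by (simp add: qf_def matrix_vector_mult_scaleR power2_eq_square)

lemma qf_zero[simp]: "qf A 0 = 0" by (simp add: qf_def)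

lemma cont_mv: "continuous_on S (\<lambda>x. (A::real^'m::finite^'k::finite) *v x)"
  by (rule linear_continuous_on) simp

lemma cont_qf: "continuous_on S (qf A)"
  unfolding qf_def by (intro continuous_intros cont_mv)

lemma cont_sf: "continuous_on S (\<lambda>p. sf (fst p) (snd p))"
proof -
  have "continuous_on S (\<lambda>p. J_mat *v snd p)"
    by (rule continuous_on_compose2[OF cont_mv[of UNIV] continuous_on_snd[OF continuous_on_id]]) auto
  then show ?thesis unfolding sf_def
    by (intro continuous_on_inner continuous_on_fst[OF continuous_on_id])
qed

lemma quad_zero: fixes P Q :: real assumes "\<forall>t. 2*t*P + t^2*Q \<le> 0" shows "P = 0"
proof (rule ccontr)
  assume "P \<noteq> 0"
  define s where "s = 1/(\<bar>Q\<bar>+1)"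
  have s0: "s > 0" by (simp add: s_def add_pos_nonneg)
  have "s * \<bar>Q\<bar> < 1" unfolding s_def by (simp add: field_simps)
  moreover have "s * (-\<bar>Q\<bar>) \<le> s * Q" by (rule mult_left_mono) (use s0 in auto)
  ultimately have "s * Q > -1" by simp
  then have h: "2 + s * Q > 0" by simp
  have "s * P^2 > 0" using s0 \<open>P \<noteq> 0\<close> by simp
  then have "s * P^2 * (2 + s*Q) > 0" using h by simp
  moreover have "2*(s*P)*P + (s*P)^2*Q = s * P^2 * (2 + s*Q)"
    by (simp add: power2_eq_square algebra_simps)
  ultimately show False using assms[rule_format, of "s*P"] by simp
qed

lemma first_order:
  fixes g :: "('n::finite) vec2 \<Rightarrow> real"
  assumes sym: "transpose A = A"
    and lin: "\<And>t. g (x + t *\<^sub>R z) = g x + t * g z"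
    and le: "\<And>t. (g (x + t *\<^sub>R z))^2 \<le> m * qf A (x + t *\<^sub>R z)"
    and eq: "(g x)^2 = m * qf A x"
  shows "g z * g x = m * (z \<bullet> (A *v x))"
proof -
  have "\<forall>t. 2*t*(g z * g x - m * (z \<bullet> (A *v x))) + t^2*((g z)^2 - m * qf A z) \<le> 0"
  proof
    fix t
    have h: "(g x + t * g z)^2 \<le> m * (qf A x + 2*t*(z \<bullet> (A *v x)) + t^2 * qf A z)"
      using le[of t] lin[of t] qf_expand[OF sym] by simp
    have e1: "(g x + t*g z)^2 = (g x)^2 + 2*t*(g z * g x) + t^2 * (g z)^2"
      by (simp add: power2_eq_square algebra_simps)
    have e2: "m * (qf A x + 2*t*(z \<bullet> (A *v x)) + t^2 * qf A z)
        = m * qf A x + 2*t*(m * (z \<bullet> (A *v x))) + t^2 * (m * qf A z)"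
      by (simp add: algebra_simps)
    have e3: "2*t*(g z * g x - m * (z \<bullet> (A *v x))) + t^2*((g z)^2 - m * qf A z)
       = 2*t*(g z * g x) - 2*t*(m * (z \<bullet> (A *v x))) + t^2*(g z)^2 - t^2*(m * qf A z)"
      by (simp add: algebra_simps)
    show "2*t*(g z * g x - m * (z \<bullet> (A *v x))) + t^2*((g z)^2 - m * qf A z) \<le> 0"
      using h eq unfolding e1 e2 e3 by linarith
  qed
  from quad_zero[OF this] show ?thesis by simp
qed

lemma qf_norm_bound:
  assumes V: "subspace V" and pd: "\<forall>z\<in>V. z \<noteq> 0 \<longrightarrow> 0 < qf A z"
  shows "\<exists>c>0. \<forall>x\<in>V. c * (norm x)^2 \<le> qf A x"
proof (cases "\<exists>z\<in>V. z \<noteq> 0")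
  case False
  then show ?thesis by (intro exI[of _ 1]) auto
next
  case True
  then obtain z where z: "z \<in> V" "z \<noteq> 0" by blast
  define S where "S = V \<inter> sphere 0 1"
  have cS: "compact S" unfolding S_def
    using closed_subspace[OF V] by (intro closed_Int_compact compact_sphere) auto
  have "(1/norm z) *\<^sub>R z \<in> S" using z V unfolding S_def by (auto simp: subspace_scale)
  then have neS: "S \<noteq> {}" by blast
  obtain x0 where x0: "x0 \<in> S" "\<forall>y\<in>S. qf A x0 \<le> qf A y"
    using continuous_attains_inf[OF cS neS cont_qf] by blast
  have c0: "qf A x0 > 0" using x0(1) pd unfolding S_def by auto
  show ?thesis
  proof (intro exI[of _ "qf A x0"] conjI ballI c0)
    fix x assume x: "x \<in> V"
    show "qf A x0 * (norm x)^2 \<le> qf A x"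
    proof (cases "x = 0")
      case True then show ?thesis by simp
    next
      case False
      have "(1/norm x) *\<^sub>R x \<in> S" using x False V unfolding S_def by (auto simp: subspace_scale)
      then have "qf A x0 \<le> (1/norm x)^2 * qf A x" using x0(2) qf_scale by metis
      then have "qf A x0 * (norm x)^2 \<le> (1/norm x)^2 * qf A x * (norm x)^2"
        by (simp add: mult_right_mono)
      also have "\<dots> = qf A x" using False by (simp add: field_simps)
      finally show ?thesis .
    qed
  qed
qed

lemma normalize_qf:
  assumes "0 < qf A w" shows "qf A ((1/sqrt (qf A w)) *\<^sub>R w) = 1"
  using assms by (simp add: qf_scale power_divide)

lemma extract_pair:
  assumes sym: "transpose A = A" and V: "subspace V"
    and symp: "\<forall>z\<in>V. z \<noteq> 0 \<longrightarrow> (\<exists>w\<in>V. sf z w \<noteq> 0)"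
    and pd: "\<forall>z\<in>V. z \<noteq> 0 \<longrightarrow> 0 < qf A z"
    and ne: "\<exists>z\<in>V. z \<noteq> 0"
  shows "\<exists>x y \<mu>. x \<in> V \<and> y \<in> V \<and> \<mu> > 0 \<and> sf x y = \<mu> \<and> qf A x = 1 \<and> qf A y = 1 \<and>
     (\<forall>z\<in>V. sf z y = \<mu> * (z \<bullet> (A *v x))) \<and> (\<forall>z\<in>V. sf x z = \<mu> * (z \<bullet> (A *v y)))"
proof -
  obtain c where c: "c > 0" "\<forall>x\<in>V. c * (norm x)^2 \<le> qf A x"
    using qf_norm_bound[OF V pd] by blast
  define K where "K = {x\<in>V. qf A x \<le> 1}"
  have "bounded K"
  proof -
    have "norm x \<le> sqrt (1/c)" if "x \<in> K" for x
    proof -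
      have "c * (norm x)^2 \<le> 1" using that c unfolding K_def by force
      then have "(norm x)^2 \<le> 1/c" using c(1) by (simp add: field_simps)
      then show ?thesis using real_le_rsqrt by blast
    qed
    then show ?thesis unfolding bounded_iff by blast
  qed
  moreover have "closed K"
  proof -
    have "closed {x. qf A x \<le> 1}" by (rule closed_Collect_le) (auto intro: cont_qf)
    then have "closed (V \<inter> {x. qf A x \<le> 1})" using closed_subspace[OF V] by blast
    moreover have "K = V \<inter> {x. qf A x \<le> 1}" unfolding K_def by blast
    ultimately show ?thesis by simp
  qed
  ultimately have cK: "compact K" by (simp add: compact_eq_bounded_closed)
  have K0: "0 \<in> K" unfolding K_def using V by (simp add: subspace_0)
  obtain p where p: "p \<in> K \<times> K" "\<forall>q\<in>K \<times> K. sf (fst q) (snd q) \<le> sf (fst p) (snd p)"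
    using continuous_attains_sup[OF compact_Times[OF cK cK] _ cont_sf] K0 by blast
  define x where "x = fst p"
  define y where "y = snd p"
  define \<mu> where "\<mu> = sf x y"
  have xK: "x \<in> K" and yK: "y \<in> K" using p(1) by (auto simp: x_def y_def mem_Times_iff)
  have xV: "x \<in> V" and yV: "y \<in> V" using xK yK unfolding K_def by auto
  have maxK: "sf a b \<le> \<mu>" if "a \<in> K" "b \<in> K" for a b
    using p(2) that unfolding \<mu>_def x_def y_def by force
  have mu0: "\<mu> \<ge> 0" using maxK[OF K0 K0] by simp
  have nK: "(1/sqrt (qf A w)) *\<^sub>R w \<in> K \<and> - ((1/sqrt (qf A w)) *\<^sub>R w) \<in> K" if "w \<in> V" "w \<noteq> 0" for w
  proof -
    have q: "0 < qf A w" using pd that by auto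
    have "qf A (- ((1/sqrt (qf A w)) *\<^sub>R w)) = qf A ((1/sqrt (qf A w)) *\<^sub>R w)"
      by (simp add: qf_def mat_vec_neg)
    then show ?thesis using normalize_qf[OF q] that V unfolding K_def
      by (auto simp: subspace_scale subspace_neg)
  qed
  have ineq1: "(sf w y)^2 \<le> \<mu>^2 * qf A w" if "w \<in> V" for w
  proof (cases "w = 0")
    case True then show ?thesis by simp
  next
    case False
    have q: "0 < qf A w" using pd that False by auto
    define s where "s = 1/sqrt (qf A w)"
    have "sf (s *\<^sub>R w) y \<le> \<mu>" "sf (- (s *\<^sub>R w)) y \<le> \<mu>"
      using nK[OF that False] maxK yK unfolding s_def by auto
    then have "\<bar>s * sf w y\<bar> \<le> \<mu>" by (auto simp: sf_scale_left sf_def)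
    then have "(s * sf w y)^2 \<le> \<mu>^2" by (metis abs_ge_zero abs_power2 power_mono power2_abs)
    then have "s^2 * (sf w y)^2 \<le> \<mu>^2" by (simp add: power_mult_distrib)
    moreover have "s^2 = 1 / qf A w" using q by (simp add: s_def power_divide)
    ultimately show ?thesis using q by (simp add: field_simps)
  qed
  have ineq2: "(sf x w)^2 \<le> \<mu>^2 * qf A w" if "w \<in> V" for w
  proof (cases "w = 0")
    case True then show ?thesis by simp
  next
    case False
    have q: "0 < qf A w" using pd that False by auto
    define s where "s = 1/sqrt (qf A w)"
    have "sf x (s *\<^sub>R w) \<le> \<mu>" "sf x (- (s *\<^sub>R w)) \<le> \<mu>"
      using nK[OF that False] maxK xK unfolding s_def by auto
    then have "\<bar>s * sf x w\<bar> \<le> \<mu>" by (auto simp: sf_def mat_vec_neg matrix_vector_mult_scaleR)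
    then have "(s * sf x w)^2 \<le> \<mu>^2" by (metis abs_ge_zero abs_power2 power_mono power2_abs)
    then have "s^2 * (sf x w)^2 \<le> \<mu>^2" by (simp add: power_mult_distrib)
    moreover have "s^2 = 1 / qf A w" using q by (simp add: s_def power_divide)
    ultimately show ?thesis using q by (simp add: field_simps)
  qed
  have mupos: "\<mu> > 0"
  proof -
    obtain z where z: "z \<in> V" "z \<noteq> 0" using ne by blast
    obtain w where w: "w \<in> V" "sf z w \<noteq> 0" using symp z by blast
    have w0: "w \<noteq> 0" using w by auto
    define a where "a = (1/sqrt (qf A z)) *\<^sub>R z"
    define b where "b = (1/sqrt (qf A w)) *\<^sub>R w"
    have abK: "a \<in> K" "b \<in> K" "- b \<in> K" using nK[OF z] nK[OF w(1) w0] unfolding a_def b_def by auto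
    have qz: "qf A z > 0" and qw: "qf A w > 0" using pd z w w0 by auto
    have "sf a b \<noteq> 0" using w(2) qz qw unfolding a_def b_def by (simp add: sf_scale_left sf_scale_right)
    moreover have "sf a (- b) = - sf a b" by (simp add: sf_def mat_vec_neg)
    ultimately have "0 < sf a b \<or> 0 < sf a (-b)" by linarith
    then show ?thesis using maxK abK by force
  qed
  have qx: "qf A x = 1"
  proof -
    have "qf A x \<le> 1" using xK unfolding K_def by auto
    moreover have "\<mu>^2 \<le> \<mu>^2 * qf A x" using ineq1[OF xV] unfolding \<mu>_def by simp
    then have "1 \<le> qf A x" using mupos by simp
    ultimately show ?thesis by simp
  qed
  have qy: "qf A y = 1"
  proof -
    have "qf A y \<le> 1" using yK unfolding K_def by auto
    moreover have "\<mu>^2 \<le> \<mu>^2 * qf A y" using ineq2[OF yV] unfolding \<mu>_def by simp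
    then have "1 \<le> qf A y" using mupos by simp
    ultimately show ?thesis by simp
  qed
  have fo1: "sf z y = \<mu> * (z \<bullet> (A *v x))" if z: "z \<in> V" for z
  proof -
    have "sf z y * sf x y = \<mu>^2 * (z \<bullet> (A *v x))"
    proof (rule first_order[OF sym, where g="\<lambda>w. sf w y"])
      show "sf (x + t *\<^sub>R z) y = sf x y + t * sf z y" for t by (simp add: sf_add_left sf_scale_left)
      show "(sf (x + t *\<^sub>R z) y)^2 \<le> \<mu>^2 * qf A (x + t *\<^sub>R z)" for t
        using ineq1 xV z V by (simp add: subspace_add subspace_scale)
      show "(sf x y)^2 = \<mu>^2 * qf A x" using qx by (simp add: \<mu>_def)
    qed
    then show ?thesis using mupos by (simp add: \<mu>_def[symmetric] power2_eq_square)
  qed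
  have fo2: "sf x z = \<mu> * (z \<bullet> (A *v y))" if z: "z \<in> V" for z
  proof -
    have "sf x z * sf x y = \<mu>^2 * (z \<bullet> (A *v y))"
    proof (rule first_order[OF sym, where g="\<lambda>w. sf x w"])
      show "sf x (y + t *\<^sub>R z) = sf x y + t * sf x z" for t by (simp add: sf_add_right sf_scale_right)
      show "(sf x (y + t *\<^sub>R z))^2 \<le> \<mu>^2 * qf A (y + t *\<^sub>R z)" for t
        using ineq2 yV z V by (simp add: subspace_add subspace_scale)
      show "(sf x y)^2 = \<mu>^2 * qf A y" using qy by (simp add: \<mu>_def)
    qed
    then show ?thesis using mupos by (simp add: \<mu>_def[symmetric] power2_eq_square)
  qed
  show ?thesis using xV yV mupos qx qy fo1 fo2 unfolding \<mu>_def by blast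
qed

definition good :: "('n::finite) sqmat \<Rightarrow> (nat \<Rightarrow> 'n vec2) \<Rightarrow> (nat \<Rightarrow> 'n vec2) \<Rightarrow> (nat \<Rightarrow> real) \<Rightarrow> nat \<Rightarrow> bool" where
  "good A u v d k \<longleftrightarrow> (\<forall>i<k. \<forall>j<k. sf (u i) (v j) = (if i = j then 1 else 0) \<and> sf (u i) (u j) = 0 \<and>
      sf (v i) (v j) = 0 \<and> u i \<bullet> (A *v v j) = 0 \<and> u i \<bullet> (A *v u j) = (if i = j then d i else 0) \<and>
      v i \<bullet> (A *v v j) = (if i = j then d i else 0))"

lemma family:
  assumes sym: "transpose A = A"
  shows "subspace V \<Longrightarrow> (\<forall>z\<in>V. z \<noteq> 0 \<longrightarrow> (\<exists>w\<in>V. sf z w \<noteq> 0)) \<Longrightarrow> (\<forall>z\<in>V. z \<noteq> 0 \<longrightarrow> 0 < qf A z)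
    \<Longrightarrow> \<exists>k u v d. (\<forall>i<k. u i \<in> V \<and> v i \<in> V \<and> d i > 0) \<and> good A u v d k \<and>
        V \<subseteq> span (u ` {..<k} \<union> v ` {..<k})"
proof (induction "dim V" arbitrary: V rule: less_induct)
  case less
  note V = less.prems(1) and symp = less.prems(2) and pd = less.prems(3)
  show ?case
  proof (cases "\<exists>z\<in>V. z \<noteq> 0")
    case False
    then have "V \<subseteq> span ((\<lambda>_. 0) ` {..<0} \<union> (\<lambda>_. 0) ` {..<0})" by (auto intro: span_zero)
    then show ?thesis unfolding good_def by blast
  next
    case True
    obtain x y \<mu> where xy: "x \<in> V" "y \<in> V" "\<mu> > 0" "sf x y = \<mu>" "qf A x = 1" "qf A y = 1"
      and fo1: "\<forall>z\<in>V. sf z y = \<mu> * (z \<bullet> (A *v x))" and fo2: "\<forall>z\<in>V. sf x z = \<mu> * (z \<bullet> (A *v y))"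
      using extract_pair[OF sym V symp pd True] by blast
    define V' where "V' = {z\<in>V. sf z x = 0 \<and> sf z y = 0}"
    have V'V: "V' \<subseteq> V" unfolding V'_def by auto
    have sV': "subspace V'"
      unfolding V'_def subspace_def using V
      by (auto simp: subspace_0 subspace_add subspace_scale sf_add_left sf_scale_left)
    have xV': "x \<notin> V'" using xy unfolding V'_def by auto
    have "V' \<subset> V" using V'V xV' xy(1) by blast
    then have dimlt: "dim V' < dim V"
      using dim_psubset[of V' V, unfolded span_eq_iff[THEN iffD2, OF sV'] span_eq_iff[THEN iffD2, OF V]]
      by blast
    have proj: "w - (sf w y / \<mu>) *\<^sub>R x + (sf w x / \<mu>) *\<^sub>R y \<in> V'" if "w \<in> V" for w
    proof -
      have yx: "sf y x = - \<mu>" using sf_antisym[of y x] xy by simp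
      show ?thesis unfolding V'_def using that xy V yx
        by (auto simp: subspace_add subspace_diff subspace_scale sf_add_left sf_diff_left sf_scale_left)
    qed
    have symp': "\<forall>z\<in>V'. z \<noteq> 0 \<longrightarrow> (\<exists>w\<in>V'. sf z w \<noteq> 0)"
    proof (intro ballI impI)
      fix z assume z: "z \<in> V'" "z \<noteq> 0"
      then obtain w where w: "w \<in> V" "sf z w \<noteq> 0" using symp V'V by blast
      let ?w = "w - (sf w y / \<mu>) *\<^sub>R x + (sf w x / \<mu>) *\<^sub>R y"
      have "sf z ?w = sf z w" using z unfolding V'_def
        by (simp add: sf_add_right sf_diff_right sf_scale_right)
      then show "\<exists>w\<in>V'. sf z w \<noteq> 0" using proj[OF w(1)] w(2) by metis
    qed
    have pd': "\<forall>z\<in>V'. z \<noteq> 0 \<longrightarrow> 0 < qf A z" using pd V'V by blast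
    obtain k u' v' d' where IH: "\<forall>i<k. u' i \<in> V' \<and> v' i \<in> V' \<and> d' i > 0" "good A u' v' d' k"
      "V' \<subseteq> span (u' ` {..<k} \<union> v' ` {..<k})"
      using less.hyps[OF dimlt sV' symp' pd'] by blast
    define s where "s = 1 / sqrt \<mu>"
    define ux where "ux = s *\<^sub>R x"
    define vy where "vy = s *\<^sub>R y"
    have s2: "s * s = 1 / \<mu>" using xy(3) by (simp add: s_def)
    have Axy: "x \<bullet> (A *v y) = 0"
    proof -
      have "sf y y = \<mu> * (y \<bullet> (A *v x))" using fo1 xy by blast
      then have "y \<bullet> (A *v x) = 0" using xy(3) by simp
      then show ?thesis using bf_sym[OF sym] by metis
    qed
    have Zfacts: "sf z ux = 0 \<and> sf z vy = 0 \<and> sf ux z = 0 \<and> sf vy z = 0 \<and>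
        z \<bullet> (A *v ux) = 0 \<and> z \<bullet> (A *v vy) = 0 \<and> ux \<bullet> (A *v z) = 0 \<and> vy \<bullet> (A *v z) = 0"
      if z: "z \<in> V'" for z
    proof -
      have a: "sf z x = 0" "sf z y = 0" "z \<in> V" using z unfolding V'_def by auto
      have b: "sf x z = 0" "sf y z = 0" using a sf_antisym by (metis neg_equal_0_iff_equal)+
      have c: "z \<bullet> (A *v x) = 0" using fo1 a xy(3) by simp
      have d: "z \<bullet> (A *v y) = 0" using fo2 b a xy(3) by simp
      have e: "x \<bullet> (A *v z) = 0" "y \<bullet> (A *v z) = 0" using c d bf_sym[OF sym] by metis+
      show ?thesis using a b c d e unfolding ux_def vy_def
        by (simp add: sf_scale_left sf_scale_right matrix_vector_mult_scaleR)
    qed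
    have Pfacts: "sf ux vy = 1" "sf ux ux = 0" "sf vy vy = 0" "ux \<bullet> (A *v vy) = 0"
      "ux \<bullet> (A *v ux) = 1/\<mu>" "vy \<bullet> (A *v vy) = 1/\<mu>"
      using xy Axy s2 unfolding ux_def vy_def qf_def
      by (simp_all add: sf_scale_left sf_scale_right matrix_vector_mult_scaleR mult.assoc[symmetric])
    define u where "u = u'(k := ux)"
    define v where "v = v'(k := vy)"
    define d where "d = d'(k := 1/\<mu>)"
    have inV: "\<forall>i<Suc k. u i \<in> V \<and> v i \<in> V \<and> d i > 0"
      using IH(1) V'V xy V unfolding u_def v_def d_def ux_def vy_def
      by (auto simp: less_Suc_eq subspace_scale)
    have gd: "good A u v d (Suc k)"
      unfolding good_def
    proof (intro allI impI)
      fix i j assume ij: "i < Suc k" "j < Suc k"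
      show "sf (u i) (v j) = (if i = j then 1 else 0) \<and> sf (u i) (u j) = 0 \<and>
      sf (v i) (v j) = 0 \<and> u i \<bullet> (A *v v j) = 0 \<and> u i \<bullet> (A *v u j) = (if i = j then d i else 0) \<and>
      v i \<bullet> (A *v v j) = (if i = j then d i else 0)"
      proof (cases "i = k")
        case True
        show ?thesis
        proof (cases "j = k")
          case True
          then show ?thesis using \<open>i = k\<close> Pfacts unfolding u_def v_def d_def by simp
        next
          case False
          then have "j < k" using ij by simp
          then have "u' j \<in> V'" "v' j \<in> V'" using IH(1) by auto
          then show ?thesis using \<open>i = k\<close> False Zfacts unfolding u_def v_def d_def by simp
        qed
      next
        case False
        then have ik: "i < k" using ij by simp
        then have uv: "u' i \<in> V'" "v' i \<in> V'" using IH(1) by auto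
        show ?thesis
        proof (cases "j = k")
          case True
          then show ?thesis using False uv Zfacts unfolding u_def v_def d_def by simp
        next
          case False
          then have "j < k" using ij by simp
          then show ?thesis using ik IH(2) \<open>i \<noteq> k\<close> False unfolding u_def v_def d_def good_def by simp
        qed
      qed
    qed
    have spn: "V \<subseteq> span (u ` {..<Suc k} \<union> v ` {..<Suc k})"
    proof
      fix w assume w: "w \<in> V"
      let ?S = "u ` {..<Suc k} \<union> v ` {..<Suc k}"
      have sub: "u' ` {..<k} \<union> v' ` {..<k} \<subseteq> ?S" unfolding u_def v_def by force
      have "w - (sf w y / \<mu>) *\<^sub>R x + (sf w x / \<mu>) *\<^sub>R y \<in> span ?S"
        using proj[OF w] IH(3) span_mono[OF sub] by blast
      moreover have "ux \<in> span ?S" "vy \<in> span ?S" unfolding u_def v_def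
        by (auto intro!: span_base)
      then have "x \<in> span ?S" "y \<in> span ?S"
        using xy(3) span_scale[of ux ?S "sqrt \<mu>"] span_scale[of vy ?S "sqrt \<mu>"]
        unfolding ux_def vy_def s_def by auto
      ultimately show "w \<in> span ?S"
        by (metis (no_types, lifting) span_add_eq span_diff span_scale add_diff_cancel diff_add_cancel)
    qed
    show ?thesis using inV gd spn by blast
  qed
qed

definition sgood :: "(nat \<Rightarrow> ('n::finite) vec2) \<Rightarrow> (nat \<Rightarrow> 'n vec2) \<Rightarrow> nat \<Rightarrow> bool" where
  "sgood u v k \<longleftrightarrow> (\<forall>i<k. \<forall>j<k. sf (u i) (v j) = (if i = j then 1 else 0) \<and> sf (u i) (u j) = 0 \<and>
      sf (v i) (v j) = 0)"

lemma good_sgood: "good A u v d k \<Longrightarrow> sgood u v k"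
  unfolding good_def sgood_def by blast

lemma sf_vanish_span:
  assumes "w \<in> span S" "\<And>s. s \<in> S \<Longrightarrow> sf z s = 0" shows "sf z w = 0"
proof -
  have "subspace {w. sf z w = 0}"
    by (auto simp: subspace_def sf_add_right sf_scale_right)
  then show ?thesis using span_induct[OF assms(1), of "\<lambda>w. sf z w = 0"] assms(2) by blast
qed

lemma sgood_count:
  assumes g: "sgood u v k" and sp: "(UNIV :: ('n::finite) vec2 set) \<subseteq> span (u ` {..<k} \<union> v ` {..<k})"
  shows "k = CARD('n)"
proof -
  let ?S = "u ` {..<k} \<union> v ` {..<k}"
  have uv: "sf (u i) (v j) = (if i = j then 1 else 0)" "sf (u i) (u j) = 0" "sf (v i) (v j) = 0"
    if "i < k" "j < k" for i j using g that unfolding sgood_def by auto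
  have vu: "sf (v j) (u i) = (if i = j then -1 else 0)" if "i < k" "j < k" for i j
    using uv(1)[OF that] sf_antisym[of "v j" "u i"] by auto
  have injU: "inj_on u {..<k}"
  proof (rule inj_onI)
    fix i j assume a: "i \<in> {..<k}" "j \<in> {..<k}" "u i = u j"
    have "sf (u j) (v i) = 1" using uv(1)[of i i] a by simp
    moreover have "sf (u j) (v i) = (if j = i then 1 else 0)" using uv(1)[of j i] a by simp
    ultimately show "i = j" by (metis zero_neq_one)
  qed
  have injV: "inj_on v {..<k}"
  proof (rule inj_onI)
    fix i j assume a: "i \<in> {..<k}" "j \<in> {..<k}" "v i = v j"
    have "sf (u i) (v j) = 1" using uv(1)[of i i] a by simp
    moreover have "sf (u i) (v j) = (if i = j then 1 else 0)" using uv(1)[of i j] a by simp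
    ultimately show "i = j" by (metis zero_neq_one)
  qed
  have disj: "u i \<noteq> v j" if "i < k" "j < k" for i j
    using uv(1)[of i i] uv(3)[of j i] that by auto
  have dis: "u ` {..<k} \<inter> v ` {..<k} = {}" using disj by auto
  have cardS: "card ?S = 2 * k"
    using card_Un_disjoint[OF _ _ dis] card_image[OF injU] card_image[OF injV] by simp
  have ind: "independent ?S"
  proof (rule independent_if_scalars_zero)
    show "finite ?S" by simp
    fix c :: "'n vec2 \<Rightarrow> real" and w
    assume s0: "(\<Sum>x\<in>?S. c x *\<^sub>R x) = 0" and w: "w \<in> ?S"
    from w show "c w = 0"
    proof
      assume "w \<in> u ` {..<k}"
      then obtain j where j: "j < k" "w = u j" by auto
      have "0 = sf (\<Sum>x\<in>?S. c x *\<^sub>R x) (v j)" using s0 by simp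
      also have "\<dots> = (\<Sum>x\<in>?S. c x * sf x (v j))" by (simp add: sf_sum_left sf_scale_left)
      also have "\<dots> = (\<Sum>x\<in>?S. if x = w then c x else 0)"
      proof (rule sum.cong[OF refl])
        fix x assume "x \<in> ?S"
        then show "c x * sf x (v j) = (if x = w then c x else 0)"
          using j uv injU disj by (auto simp: inj_on_eq_iff)
      qed
      also have "\<dots> = c w" using w by simp
      finally show ?thesis by simp
    next
      assume "w \<in> v ` {..<k}"
      then obtain j where j: "j < k" "w = v j" by auto
      have "0 = sf (u j) (\<Sum>x\<in>?S. c x *\<^sub>R x)" using s0 by simp
      also have "\<dots> = (\<Sum>x\<in>?S. c x * sf (u j) x)" by (simp add: sf_sum_right sf_scale_right)
      also have "\<dots> = (\<Sum>x\<in>?S. if x = w then c x else 0)"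
      proof (rule sum.cong[OF refl])
        fix x assume "x \<in> ?S"
        then show "c x * sf (u j) x = (if x = w then c x else 0)"
          using j uv injV disj by (auto simp: inj_on_eq_iff)
      qed
      also have "\<dots> = c w" using w by simp
      finally show ?thesis by simp
    qed
  qed
  have "card ?S = dim (UNIV :: 'n vec2 set)"
    by (rule basis_card_eq_dim[OF _ sp ind]) simp
  then have "2 * k = 2 * CARD('n)" using cardS by simp
  then show ?thesis by simp
qed

lemma psd_zero:
  assumes sym: "transpose A = A" and nn: "\<forall>x. 0 \<le> x \<bullet> (A *v x)" and z: "z \<bullet> (A *v z) = 0"
  shows "A *v z = (0::('n::finite) vec2)"
proof -
  have yz: "y \<bullet> (A *v z) = 0" for y
  proof -
    have "\<forall>t. 2*t*(- (y \<bullet> (A *v z))) + t^2*(- qf A y) \<le> 0"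
    proof
      fix t
      have "0 \<le> qf A (z + t *\<^sub>R y)" using nn by (simp add: qf_def)
      then show "2*t*(- (y \<bullet> (A *v z))) + t^2*(- qf A y) \<le> 0"
        using qf_expand[OF sym, of z t y] z by (simp add: qf_def)
    qed
    from quad_zero[OF this] show ?thesis by simp
  qed
  from yz[of "A *v z"] show ?thesis by simp
qed

lemma williamson_exists:
  fixes A :: "('n::finite) sqmat"
  assumes psd: "psd_sym A" and ker: "symplectic_subspace (kernel_mat A)"
  shows "\<exists>M D. symplectic M \<and> (\<forall>i. 0 \<le> D $ i) \<and> transpose M ** A ** M = diag2 D"
proof -
  have sym: "transpose A = A" and nn: "\<forall>x. 0 \<le> x \<bullet> (A *v x)" using psd unfolding psd_sym_def by auto
  define W where "W = kernel_mat A"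
  have sW: "subspace W" and sympW: "\<forall>z\<in>W. z \<noteq> 0 \<longrightarrow> (\<exists>w\<in>W. sf z w \<noteq> 0)"
    using ker unfolding W_def symplectic_subspace_def sf_def by auto
  have AW: "A *v w = 0" if "w \<in> W" for w using that unfolding W_def kernel_mat_def by simp
  have pdI: "\<forall>z\<in>W. z \<noteq> 0 \<longrightarrow> 0 < qf (mat 1) z" by (simp add: qf_def)
  obtain kW e f dW where fW: "\<forall>i<kW. e i \<in> W \<and> f i \<in> W \<and> dW i > 0" "good (mat 1) e f dW kW"
    "W \<subseteq> span (e ` {..<kW} \<union> f ` {..<kW})"
    using family[of "mat 1" W] sW sympW pdI by auto
  have sgW: "sgood e f kW" using fW(2) by (rule good_sgood)
  have ef: "sf (e i) (f j) = (if i = j then 1 else 0)" "sf (e i) (e j) = 0" "sf (f i) (f j) = 0"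
    if "i < kW" "j < kW" for i j using sgW that unfolding sgood_def by auto
  define P where "P z = z - (\<Sum>i<kW. sf z (f i) *\<^sub>R e i - sf z (e i) *\<^sub>R f i)" for z
  have PW: "z - P z \<in> W" for z
    unfolding P_def using fW(1) sW
    by (auto intro!: subspace_sum subspace_diff subspace_scale)
  have Pe: "sf (P z) (e j) = 0" if j: "j < kW" for z j
  proof -
    have "(\<Sum>i<kW. sf (sf z (f i) *\<^sub>R e i - sf z (e i) *\<^sub>R f i) (e j))
        = (\<Sum>i<kW. if i = j then sf z (e j) else 0)"
    proof (rule sum.cong[OF refl])
      fix i assume i: "i \<in> {..<kW}"
      have "sf (f i) (e j) = - (if j = i then 1 else 0)" using ef(1)[of j i] i j sf_antisym[of "f i" "e j"] by auto
      then show "sf (sf z (f i) *\<^sub>R e i - sf z (e i) *\<^sub>R f i) (e j) = (if i = j then sf z (e j) else 0)"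
        using ef(2)[of i j] i j by (auto simp: sf_diff_left sf_scale_left)
    qed
    then show ?thesis using j unfolding P_def by (simp add: sf_diff_left sf_sum_left)
  qed
  have Pf: "sf (P z) (f j) = 0" if j: "j < kW" for z j
  proof -
    have "(\<Sum>i<kW. sf (sf z (f i) *\<^sub>R e i - sf z (e i) *\<^sub>R f i) (f j))
        = (\<Sum>i<kW. if i = j then sf z (f j) else 0)"
    proof (rule sum.cong[OF refl])
      fix i assume i: "i \<in> {..<kW}"
      show "sf (sf z (f i) *\<^sub>R e i - sf z (e i) *\<^sub>R f i) (f j) = (if i = j then sf z (f j) else 0)"
        using ef(1)[of i j] ef(3)[of i j] i j by (auto simp: sf_diff_left sf_scale_left)
    qed
    then show ?thesis using j unfolding P_def by (simp add: sf_diff_left sf_sum_left)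
  qed
  define V0 where "V0 = {z. \<forall>w\<in>W. sf z w = 0}"
  have PV0': "sf (P z) w = 0" if "w \<in> W" for z w
  proof -
    have "w \<in> span (e ` {..<kW} \<union> f ` {..<kW})" using fW(3) that by blast
    then show "sf (P z) w = 0" by (rule sf_vanish_span) (auto simp: Pe Pf)
  qed
  have PV0: "P z \<in> V0" for z unfolding V0_def using PV0' by blast
  have sV0: "subspace V0" unfolding V0_def subspace_def
    by (auto simp: sf_add_left sf_scale_left)
  have crossV: "sf a b = 0" "sf b a = 0" if "a \<in> V0" "b \<in> W" for a b
    using that sf_antisym[of b a] unfolding V0_def by auto
  have sympV0: "\<forall>z\<in>V0. z \<noteq> 0 \<longrightarrow> (\<exists>w\<in>V0. sf z w \<noteq> 0)"
  proof (intro ballI impI)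
    fix z assume z: "z \<in> V0" "z \<noteq> 0"
    define w where "w = - (J_mat *v z)"
    have "sf z w \<noteq> 0" unfolding w_def using sf_nondeg[OF z(2)] .
    moreover have "sf z (P w) = sf z w - sf z (w - P w)" by (simp add: sf_diff_right)
    moreover have "sf z (w - P w) = 0" using crossV(1)[OF z(1) PW] .
    ultimately show "\<exists>w\<in>V0. sf z w \<noteq> 0" using PV0[of w] by (metis diff_zero)
  qed
  have pdV0: "\<forall>z\<in>V0. z \<noteq> 0 \<longrightarrow> 0 < qf A z"
  proof (intro ballI impI)
    fix z assume z: "z \<in> V0" "z \<noteq> 0"
    show "0 < qf A z"
    proof (rule ccontr)
      assume "\<not> 0 < qf A z"
      then have "z \<bullet> (A *v z) = 0" using nn[rule_format, of z] unfolding qf_def by linarith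
      then have "z \<in> W" using psd_zero[OF sym nn] unfolding W_def kernel_mat_def by simp
      then obtain w where "w \<in> W" "sf z w \<noteq> 0" using sympW z by blast
      then show False using z unfolding V0_def by auto
    qed
  qed
  obtain kV u v dV where fV: "\<forall>i<kV. u i \<in> V0 \<and> v i \<in> V0 \<and> dV i > 0" "good A u v dV kV"
    "V0 \<subseteq> span (u ` {..<kV} \<union> v ` {..<kV})"
    using family[OF sym sV0 sympV0 pdV0] by blast
  have uvA: "sf (u i) (v j) = (if i = j then 1 else 0)" "sf (u i) (u j) = 0" "sf (v i) (v j) = 0"
    "u i \<bullet> (A *v v j) = 0" "u i \<bullet> (A *v u j) = (if i = j then dV i else 0)"
    "v i \<bullet> (A *v v j) = (if i = j then dV i else 0)"
    if "i < kV" "j < kV" for i j using fV(2) that unfolding good_def by auto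
  define k where "k = kV + kW"
  define U where "U i = (if i < kV then u i else e (i - kV))" for i
  define Vv where "Vv i = (if i < kV then v i else f (i - kV))" for i
  define Dd where "Dd i = (if i < kV then dV i else 0)" for i
  have Dd0: "0 \<le> Dd i" for i using fV(1) unfolding Dd_def by (auto simp: less_imp_le)
  have gk: "good A U Vv Dd k" unfolding good_def
  proof (intro allI impI)
    fix i j assume i: "i < k" and j: "j < k"
    show "sf (U i) (Vv j) = (if i = j then 1 else 0) \<and> sf (U i) (U j) = 0 \<and>
      sf (Vv i) (Vv j) = 0 \<and> U i \<bullet> (A *v Vv j) = 0 \<and> U i \<bullet> (A *v U j) = (if i = j then Dd i else 0) \<and>
      Vv i \<bullet> (A *v Vv j) = (if i = j then Dd i else 0)"
    proof (cases "i < kV")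
      case True
      note iV = True
      show ?thesis
      proof (cases "j < kV")
        case True
        then show ?thesis using iV uvA[OF iV True] unfolding U_def Vv_def Dd_def by simp
      next
        case False
        then have jW: "j - kV < kW" using j unfolding k_def by simp
        have inW: "e (j - kV) \<in> W" "f (j - kV) \<in> W" using fW(1) jW by auto
        have inV: "u i \<in> V0" "v i \<in> V0" using fV(1) iV by auto
        have "A *v e (j - kV) = 0" "A *v f (j - kV) = 0" using AW inW by auto
        then show ?thesis using iV False crossV inW inV unfolding U_def Vv_def Dd_def by auto
      qed
    next
      case False
      note iW' = False
      then have iW: "i - kV < kW" using i unfolding k_def by simp
      have inWi: "e (i - kV) \<in> W" "f (i - kV) \<in> W" using fW(1) iW by auto
      have Ai: "A *v e (i - kV) = 0" "A *v f (i - kV) = 0" using AW inWi by auto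
      show ?thesis
      proof (cases "j < kV")
        case True
        have inV: "u j \<in> V0" "v j \<in> V0" using fV(1) True by auto
        have "e (i - kV) \<bullet> (A *v v j) = v j \<bullet> (A *v e (i - kV))"
             "e (i - kV) \<bullet> (A *v u j) = u j \<bullet> (A *v e (i - kV))"
             "f (i - kV) \<bullet> (A *v v j) = v j \<bullet> (A *v f (i - kV))"
          using bf_sym[OF sym] by blast+
        then show ?thesis using iW' True crossV inWi inV Ai unfolding U_def Vv_def Dd_def by auto
      next
        case False
        then have jW: "j - kV < kW" using j unfolding k_def by simp
        have inW: "e (j - kV) \<in> W" "f (j - kV) \<in> W" using fW(1) jW by auto
        have "A *v e (j - kV) = 0" "A *v f (j - kV) = 0" using AW inW by auto
        moreover have "(i - kV = j - kV) = (i = j)" using iW' False by auto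
        ultimately show ?thesis using iW' False ef[OF iW jW] unfolding U_def Vv_def Dd_def by auto
      qed
    qed
  qed
  have spk: "(UNIV :: 'n vec2 set) \<subseteq> span (U ` {..<k} \<union> Vv ` {..<k})"
  proof
    fix z :: "'n vec2"
    let ?S = "U ` {..<k} \<union> Vv ` {..<k}"
    have s1: "u ` {..<kV} \<union> v ` {..<kV} \<subseteq> ?S"
    proof -
      have "u i \<in> ?S" "v i \<in> ?S" if "i < kV" for i
        using that image_eqI[of "u i" U i "{..<k}"] image_eqI[of "v i" Vv i "{..<k}"]
        unfolding U_def Vv_def k_def by auto
      then show ?thesis by auto
    qed
    have s2: "e ` {..<kW} \<union> f ` {..<kW} \<subseteq> ?S"
    proof -
      have "e i \<in> ?S" "f i \<in> ?S" if "i < kW" for i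
        using that image_eqI[of "e i" U "kV + i" "{..<k}"] image_eqI[of "f i" Vv "kV + i" "{..<k}"]
        unfolding U_def Vv_def k_def by auto
      then show ?thesis by auto
    qed
    have "P z \<in> span ?S" using PV0[of z] fV(3) span_mono[OF s1] by blast
    moreover have "z - P z \<in> span ?S" using PW[of z] fW(3) span_mono[OF s2] by blast
    ultimately have "P z + (z - P z) \<in> span ?S" by (rule span_add)
    then show "z \<in> span ?S" by simp
  qed
  have kn: "k = CARD('n)" using sgood_count[OF good_sgood[OF gk] spk] .
  have gU: "sf (U i) (Vv j) = (if i = j then 1 else 0)" "sf (U i) (U j) = 0"
      "sf (Vv i) (Vv j) = 0" "U i \<bullet> (A *v Vv j) = 0" "U i \<bullet> (A *v U j) = (if i = j then Dd i else 0)"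
      "Vv i \<bullet> (A *v Vv j) = (if i = j then Dd i else 0)" if "i < k" "j < k" for i j
    using gk that unfolding good_def by auto
  obtain h :: "'n \<Rightarrow> nat" where h: "bij_betw h UNIV {0..<CARD('n)}"
    using ex_bij_betw_finite_nat[of "UNIV :: 'n set"] by auto
  have hk: "h i < k" for i using h kn by (auto dest: bij_betw_apply)
  have heq: "h i = h j \<longleftrightarrow> i = j" for i j using h by (auto simp: bij_betw_def inj_eq)
  define col where "col a = (case a of Inl i \<Rightarrow> U (h i) | Inr i \<Rightarrow> Vv (h i))" for a
  define M where "M = colmat col"
  define D where "D = (\<chi> i. Dd (h i))"
  have symM: "symplectic M"
    unfolding symplectic_iff_entries M_def column_colmat
  proof (intro allI)
    fix a b :: "'n + 'n"
    show "col a \<bullet> (J_mat *v col b) = J_mat $ a $ b"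
    proof (cases a; cases b)
      fix i j assume ab: "a = Inr i" "b = Inl j"
      have "sf (Vv (h i)) (U (h j)) = - sf (U (h j)) (Vv (h i))" by (rule sf_antisym)
      then show ?thesis using ab gU(1)[OF hk hk, of j i] heq[of j i]
        unfolding col_def sf_def by (auto simp: J_entry)
    qed (auto simp: col_def J_entry heq gU[OF hk hk, unfolded sf_def])
  qed
  have cong: "transpose M ** A ** M = diag2 D"
  proof -
    have "(transpose M ** A ** M) $ a $ b = diag2 D $ a $ b" for a b
    proof -
      have "(transpose M ** A ** M) $ a $ b = col a \<bullet> (A *v col b)"
        unfolding M_def by (rule congr_colmat)
      also have "\<dots> = diag2 D $ a $ b"
      proof (cases a; cases b)
        fix i j assume ab: "a = Inr i" "b = Inl j"
        have "Vv (h i) \<bullet> (A *v U (h j)) = U (h j) \<bullet> (A *v Vv (h i))" using bf_sym[OF sym] by blast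
        then show "col a \<bullet> (A *v col b) = diag2 D $ a $ b"
          using ab gU(4)[OF hk hk, of j i] unfolding col_def diag2_def by simp
      qed (auto simp: col_def diag2_def D_def heq gU[OF hk hk])
      finally show ?thesis .
    qed
    then show ?thesis by (simp add: vec_eq_iff)
  qed
  have "\<forall>i. 0 \<le> D $ i" unfolding D_def using Dd0 by simp
  then show ?thesis using symM cong by blast
qed

lemma diag2_entry: "diag2 D $ a $ b = (if a = b then (case a of Inl i \<Rightarrow> D $ i | Inr i \<Rightarrow> D $ i) else 0)"
  unfolding diag2_def by simp

lemma mult_diag2_right: "(X ** diag2 D) $ a $ b = X $ a $ b * (case b of Inl i \<Rightarrow> D $ i | Inr i \<Rightarrow> D $ i)"
proof -
  have "(X ** diag2 D) $ a $ b = (\<Sum>c\<in>UNIV. if c = b then X $ a $ c * (case c of Inl i \<Rightarrow> D $ i | Inr i \<Rightarrow> D $ i) else 0)"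
    unfolding matrix_matrix_mult_def diag2_entry by (simp add: if_distrib cong: if_cong)
  then show ?thesis by simp
qed

lemma mult_diag2_left: "(diag2 D ** X) $ a $ b = (case a of Inl i \<Rightarrow> D $ i | Inr i \<Rightarrow> D $ i) * X $ a $ b"
proof -
  have "(diag2 D ** X) $ a $ b = (\<Sum>c\<in>UNIV. diag2 D $ a $ c * X $ c $ b)"
    by (simp add: matrix_matrix_mult_def)
  also have "\<dots> = (\<Sum>c\<in>UNIV. if c = a then (case a of Inl i \<Rightarrow> D $ i | Inr i \<Rightarrow> D $ i) * X $ a $ b else 0)"
    by (rule sum.cong) (auto simp: diag2_entry)
  finally show ?thesis by simp
qed

lemma mat_diff_ldistrib: "A ** (B - C) = A ** B - A ** (C::real^'m::finite^'k::finite)"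
  by (simp add: vec_eq_iff matrix_matrix_mult_def sum_subtractf algebra_simps)
lemma mat_diff_rdistrib: "(B - C) ** A = B ** A - C ** (A::real^'m::finite^'k::finite)"
  by (simp add: vec_eq_iff matrix_matrix_mult_def sum_subtractf algebra_simps)

lemma J_diag2_comm: "J_mat ** diag2 D = diag2 D ** J_mat"
  by (simp add: vec_eq_iff mult_diag2_right mult_diag2_left J_entry split: sum.splits)

lemma diag2_mult: "diag2 D ** diag2 E = diag2 (\<chi> i. D $ i * E $ i)"
  by (simp add: vec_eq_iff mult_diag2_right diag2_entry split: sum.splits)

lemma JD_sq: "(J_mat ** diag2 D) ** (J_mat ** diag2 D) = - diag2 (\<chi> i. D $ i * D $ i)"
proof -
  have "(J_mat ** diag2 D) ** (J_mat ** diag2 D) = J_mat ** (diag2 D ** J_mat) ** diag2 D"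
    by (simp add: matrix_mul_assoc)
  also have "\<dots> = (J_mat ** J_mat) ** (diag2 D ** diag2 D)"
    by (simp add: J_diag2_comm[symmetric] matrix_mul_assoc)
  also have "\<dots> = - diag2 (\<chi> i. D $ i * D $ i)"
    by (simp add: JJ mat_neg_left diag2_mult)
  finally show ?thesis .
qed

lemma det_char_diag2:
  "det (x *\<^sub>R mat 1 - diag2 E) = (\<Prod>i\<in>UNIV. x - E $ i) ^ 2"
proof -
  have "det (x *\<^sub>R mat 1 - diag2 E) = (\<Prod>a\<in>UNIV. (x *\<^sub>R mat 1 - diag2 E) $ a $ a)"
    by (rule det_diagonal) (simp add: diag2_entry mat_def)
  also have "\<dots> = (\<Prod>i\<in>UNIV. x - E $ i) * (\<Prod>i\<in>UNIV. x - E $ i)"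
    by (simp add: UNIV_Plus_UNIV[symmetric] prod.Plus diag2_entry mat_def del: UNIV_Plus_UNIV)
  finally show ?thesis by (simp add: power2_eq_square)
qed

lemma sum_singletons_mset: "finite A \<Longrightarrow> (\<Sum>i\<in>A. {#f i#}) = image_mset f (mset_set A)"
  by (induct A rule: finite_induct) auto

lemma charpoly_eq_mset:
  fixes E1 E2 :: "real ^ ('n::finite)"
  assumes "\<And>x. (\<Prod>i\<in>UNIV. x - E1 $ i) ^ 2 = (\<Prod>i\<in>UNIV. x - E2 $ i) ^ 2"
  shows "image_mset (\<lambda>i. E1 $ i) (mset_set UNIV) = image_mset (\<lambda>i. E2 $ i) (mset_set UNIV)"
proof -
  define p where "p E = (\<Prod>i\<in>(UNIV::'n set). [:- (E $ i), 1:])" for E :: "real^'n"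
  have pe: "poly (p E) x = (\<Prod>i\<in>UNIV. x - E $ i)" for E x
    by (simp add: p_def poly_prod)
  have "poly (p E1 ^ 2) = poly (p E2 ^ 2)" using assms by (simp add: pe fun_eq_iff)
  then have "p E1 ^ 2 = p E2 ^ 2" by (simp add: poly_eq_poly_eq_iff)
  then have "proots (p E1 ^ 2) = proots (p E2 ^ 2)" by simp
  moreover have "proots (p E) = image_mset (\<lambda>i. E $ i) (mset_set UNIV)" for E
  proof -
    have "proots (p E) = (\<Sum>i\<in>UNIV. proots [:- (E $ i), 1:])"
      unfolding p_def by (rule proots_prod) simp
    also have "\<dots> = (\<Sum>i\<in>UNIV. {#E $ i#})" by simp
    finally show ?thesis by (simp add: sum_singletons_mset)
  qed
  ultimately show ?thesis by (simp add: proots_power repeat_mset_cancel1)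
qed

lemma williamson_unique:
  fixes A :: "('n::finite) sqmat"
  assumes s1: "symplectic M1" and s2: "symplectic M2"
    and e1: "transpose M1 ** A ** M1 = diag2 D1" and e2: "transpose M2 ** A ** M2 = diag2 D2"
    and p1: "\<forall>i. 0 \<le> D1 $ i" and p2: "\<forall>i. 0 \<le> D2 $ i"
  shows "sorted_entries D1 = sorted_entries D2"
proof -
  define N where "N = sinv M1 ** M2"
  have sN: "symplectic N" unfolding N_def by (intro symplectic_mult symplectic_sinv s1 s2)
  have "transpose N ** diag2 D1 ** N = transpose M2 ** (transpose (M1 ** sinv M1) ** A ** (M1 ** sinv M1)) ** M2"
    unfolding N_def e1[symmetric] by (simp add: matrix_transpose_mul matrix_mul_assoc)
  also have "\<dots> = diag2 D2" using e2 by (simp add: sinv_right[OF s1])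
  finally have tN: "transpose N ** diag2 D1 ** N = diag2 D2" .
  define Y1 where "Y1 = J_mat ** diag2 D1"
  define Y2 where "Y2 = J_mat ** diag2 D2"
  have "Y2 = (J_mat ** transpose N) ** diag2 D1 ** N" unfolding Y2_def tN[symmetric] by (simp add: matrix_mul_assoc)
  then have Y2: "Y2 = sinv N ** Y1 ** N" unfolding Y1_def by (simp add: symplectic_J_comm[OF sN] matrix_mul_assoc)
  have "Y2 ** Y2 = sinv N ** Y1 ** (N ** sinv N) ** Y1 ** N" unfolding Y2 by (simp add: matrix_mul_assoc)
  then have "Y2 ** Y2 = sinv N ** (Y1 ** Y1) ** N" by (simp add: sinv_right[OF sN] matrix_mul_assoc)
  then have "- diag2 (\<chi> i. D2 $ i * D2 $ i) = sinv N ** (- diag2 (\<chi> i. D1 $ i * D1 $ i)) ** N"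
    unfolding Y1_def Y2_def JD_sq .
  then have sim: "diag2 (\<chi> i. D2 $ i * D2 $ i) = sinv N ** diag2 (\<chi> i. D1 $ i * D1 $ i) ** N"
    by (simp add: mat_neg_left mat_neg_right)
  have dd: "det (sinv N) * det N = 1" using sinv_left[OF sN] det_mul[of "sinv N" N] by simp
  have cp: "(\<Prod>i\<in>UNIV. x - D1 $ i * D1 $ i) ^ 2 = (\<Prod>i\<in>UNIV. x - D2 $ i * D2 $ i) ^ 2" for x
  proof -
    let ?E1 = "\<chi> i. D1 $ i * D1 $ i"
    have "sinv N ** (x *\<^sub>R mat 1 - diag2 ?E1) ** N = sinv N ** (x *\<^sub>R mat 1) ** N - sinv N ** diag2 ?E1 ** N"
      by (simp add: mat_diff_ldistrib mat_diff_rdistrib)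
    also have "sinv N ** (x *\<^sub>R mat 1) ** N = x *\<^sub>R mat 1"
      by (simp add: matrix_scalar_ac scalar_matrix_assoc[symmetric] sinv_left[OF sN])
    finally have "x *\<^sub>R mat 1 - diag2 (\<chi> i. D2 $ i * D2 $ i) = sinv N ** (x *\<^sub>R mat 1 - diag2 ?E1) ** N"
      unfolding sim by simp
    then have "det (x *\<^sub>R mat 1 - diag2 (\<chi> i. D2 $ i * D2 $ i)) = det (sinv N) * det (x *\<^sub>R mat 1 - diag2 ?E1) * det N"
      by (simp add: det_mul)
    also have "\<dots> = det (x *\<^sub>R mat 1 - diag2 ?E1)" using dd by (simp add: algebra_simps)
    finally show ?thesis unfolding det_char_diag2 by simp
  qed
  have "image_mset (\<lambda>i. (\<chi> i. D1 $ i * D1 $ i) $ i) (mset_set UNIV)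
      = image_mset (\<lambda>i. (\<chi> i. D2 $ i * D2 $ i) $ i) (mset_set UNIV)"
    by (rule charpoly_eq_mset) (simp add: cp)
  then have "image_mset sqrt (image_mset (\<lambda>i. D1 $ i * D1 $ i) (mset_set UNIV))
      = image_mset sqrt (image_mset (\<lambda>i. D2 $ i * D2 $ i) (mset_set UNIV))" by simp
  moreover have "image_mset sqrt (image_mset (\<lambda>i. D $ i * D $ i) (mset_set UNIV)) = image_mset (\<lambda>i. D $ i) (mset_set UNIV)"
    if "\<forall>i. 0 \<le> D $ i" for D :: "real^'n"
    using that by (simp add: multiset.map_comp o_def real_sqrt_mult_self)
  ultimately have "image_mset (\<lambda>i. D1 $ i) (mset_set UNIV) = image_mset (\<lambda>i. D2 $ i) (mset_set UNIV)"
    using p1 p2 by metis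
  then show ?thesis unfolding sorted_entries_def by simp
qed

lemma sympl_eigs_eq:
  assumes "symplectic M" "\<forall>i. 0 \<le> D $ i" "transpose M ** A ** M = diag2 D"
  shows "sympl_eigs A = sorted_entries D"
  unfolding sympl_eigs_def
proof (rule the_equality)
  show "\<exists>M' D'. symplectic M' \<and> (\<forall>i. 0 \<le> D' $ i) \<and> transpose M' ** A ** M' = diag2 D' \<and>
      sorted_entries D = sorted_entries D'" using assms by blast
next
  fix L assume "\<exists>M' D'. symplectic M' \<and> (\<forall>i. 0 \<le> D' $ i) \<and> transpose M' ** A ** M' = diag2 D' \<and> L = sorted_entries D'"
  then obtain M' D' where "symplectic M'" "\<forall>i. 0 \<le> D' $ i" "transpose M' ** A ** M' = diag2 D'" "L = sorted_entries D'"
    by blast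
  then show "L = sorted_entries D" using williamson_unique[OF assms(1) _ assms(3)] assms(2) by metis
qed

lemma cl_core:
  fixes x y c :: "'a \<Rightarrow> real"
  shows "finite S \<Longrightarrow> finite T \<Longrightarrow> card S = card T \<Longrightarrow>
    (\<forall>U\<subseteq>S. \<exists>V\<subseteq>T. card V = card U \<and> sum y V \<le> sum x U) \<Longrightarrow> (\<forall>i\<in>S. 0 \<le> c i) \<Longrightarrow>
    \<exists>\<pi>. bij_betw \<pi> S T \<and> (\<Sum>i\<in>S. c i * y (\<pi> i)) \<le> (\<Sum>i\<in>S. c i * x i)"
proof (induction "card S" arbitrary: S T c rule: less_induct)
  case less
  note fS = less.prems(1) and fT = less.prems(2) and cST = less.prems(3) and maj = less.prems(4)
    and c0 = less.prems(5)
  show ?case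
  proof (cases "S = {}")
    case True
    then have "T = {}" using cST fT by simp
    then show ?thesis using True by (auto intro!: exI[of _ id])
  next
    case False
    then have Tne: "T \<noteq> {}" using cST fS fT by auto
    define m where "m = Min (c ` S)"
    have "m \<in> c ` S" unfolding m_def using fS False by (intro Min_in) auto
    then obtain i0 where i0: "i0 \<in> S" "c i0 = m" by auto
    have mle: "m \<le> c i" if "i \<in> S" for i unfolding m_def using fS that by simp
    define M where "M = Max (y ` T)"
    have "M \<in> y ` T" unfolding M_def using fT Tne by (intro Max_in) auto
    then obtain j0 where j0: "j0 \<in> T" "y j0 = M" by auto
    have yle: "y j \<le> M" if "j \<in> T" for j unfolding M_def using fT that by simp
    define S' where "S' = S - {i0}"
    define T' where "T' = T - {j0}"
    have cS': "card S' = card S - 1" and cT': "card T' = card T - 1"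
      using i0 j0 fS fT unfolding S'_def T'_def by (auto simp: card_Diff_singleton)
    have cS'T': "card S' = card T'" using cS' cT' cST by simp
    have lt: "card S' < card S" using cS' False fS by (simp add: card_gt_0_iff)
    have maj': "\<forall>U\<subseteq>S'. \<exists>V\<subseteq>T'. card V = card U \<and> sum y V \<le> sum x U"
    proof (intro allI impI)
      fix U assume U: "U \<subseteq> S'"
      then have US: "U \<subseteq> S" unfolding S'_def by auto
      obtain V where V: "V \<subseteq> T" "card V = card U" "sum y V \<le> sum x U" using maj US by blast
      show "\<exists>V\<subseteq>T'. card V = card U \<and> sum y V \<le> sum x U"
      proof (cases "j0 \<in> V")
        case False
        then show ?thesis using V unfolding T'_def by blast
      next
        case True
        have "card U \<le> card S'" using U fS unfolding S'_def by (simp add: card_mono)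
        then have "card V < card T" using V cS' cST lt by simp
        then have "V \<noteq> T" by auto
        then obtain j1 where j1: "j1 \<in> T" "j1 \<notin> V" using V(1) by blast
        define V' where "V' = insert j1 (V - {j0})"
        have fV: "finite V" using V(1) fT finite_subset by blast
        have "card V' = card V" unfolding V'_def using j1 True fV
          by (simp add: card_Diff_singleton) (metis One_nat_def Suc_pred card_gt_0_iff empty_iff)
        moreover have "sum y V' = sum y V - y j0 + y j1" unfolding V'_def using j1 True fV
          by (simp add: sum_diff1)
        moreover have "y j1 \<le> y j0" using yle j1 j0 by simp
        moreover have "V' \<subseteq> T'" unfolding V'_def T'_def using j1 V(1) True by auto
        ultimately show ?thesis using V by (intro exI[of _ V']) auto
      qed
    qed
    define c' where "c' i = c i - m" for i
    have c'0: "\<forall>i\<in>S'. 0 \<le> c' i" using mle unfolding c'_def S'_def by auto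
    obtain \<pi>' where \<pi>': "bij_betw \<pi>' S' T'" "(\<Sum>i\<in>S'. c' i * y (\<pi>' i)) \<le> (\<Sum>i\<in>S'. c' i * x i)"
      using less.hyps[OF lt _ _ cS'T' maj' c'0] fS fT unfolding S'_def T'_def by auto
    define \<pi> where "\<pi> = \<pi>'(i0 := j0)"
    have SS: "S = insert i0 S'" and TT: "T = insert j0 T'" using i0 j0 unfolding S'_def T'_def by auto
    have i0S': "i0 \<notin> S'" and j0T': "j0 \<notin> T'" unfolding S'_def T'_def by auto
    have eqS': "\<And>i. i \<in> S' \<Longrightarrow> \<pi> i = \<pi>' i" unfolding \<pi>_def using i0S' by auto
    have bij: "bij_betw \<pi> S T"
    proof -
      have b1: "bij_betw \<pi> S' T'" using bij_betw_cong[of S' \<pi> \<pi>'] eqS' \<pi>'(1) by metis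
      have b2: "bij_betw \<pi> {i0} {j0}" by (simp add: \<pi>_def bij_betw_def)
      have "bij_betw \<pi> (S' \<union> {i0}) (T' \<union> {j0})" by (rule bij_betw_combine[OF b1 b2]) (use j0T' in auto)
      then show ?thesis unfolding SS TT by simp
    qed
    have fS': "finite S'" "finite T'" using fS fT unfolding S'_def T'_def by auto
    have sumT': "(\<Sum>i\<in>S'. y (\<pi>' i)) = sum y T'"
      using sum.reindex_bij_betw[OF \<pi>'(1), of y] by simp
    have "(\<Sum>i\<in>S. c i * y (\<pi> i)) = c i0 * y j0 + (\<Sum>i\<in>S'. c i * y (\<pi>' i))"
      unfolding SS using fS' i0S' eqS' by (simp add: \<pi>_def)
    also have "(\<Sum>i\<in>S'. c i * y (\<pi>' i)) = (\<Sum>i\<in>S'. c' i * y (\<pi>' i)) + m * (\<Sum>i\<in>S'. y (\<pi>' i))"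
      unfolding c'_def by (simp add: algebra_simps sum.distrib sum_distrib_left sum_subtractf)
    finally have L: "(\<Sum>i\<in>S. c i * y (\<pi> i)) = m * sum y T + (\<Sum>i\<in>S'. c' i * y (\<pi>' i))"
      unfolding sumT' TT using fS' j0T' i0 by (simp add: algebra_simps)
    have "(\<Sum>i\<in>S. c i * x i) = (\<Sum>i\<in>S. c' i * x i) + m * sum x S"
      unfolding c'_def by (simp add: algebra_simps sum.distrib sum_distrib_left sum_subtractf)
    also have "(\<Sum>i\<in>S. c' i * x i) = (\<Sum>i\<in>S'. c' i * x i)"
      unfolding SS using fS' i0S' i0 by (simp add: c'_def)
    finally have R: "(\<Sum>i\<in>S. c i * x i) = m * sum x S + (\<Sum>i\<in>S'. c' i * x i)" by simp
    obtain V where V: "V \<subseteq> T" "card V = card S" "sum y V \<le> sum x S" using maj by blast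
    have "V = T" using card_subset_eq[OF fT V(1)] V(2) cST by simp
    then have tot: "sum y T \<le> sum x S" using V by simp
    have m0: "0 \<le> m" using c0 i0 by auto
    have "m * sum y T \<le> m * sum x S" using mult_left_mono[OF tot m0] .
    then have "(\<Sum>i\<in>S. c i * y (\<pi> i)) \<le> (\<Sum>i\<in>S. c i * x i)" using L R \<pi>'(2) by linarith
    then show ?thesis using bij by blast
  qed
qed

lemma sorted_entries_props:
  fixes D :: "real ^ ('n::finite)"
  shows "sorted (sorted_entries D)" "length (sorted_entries D) = CARD('n)"
    "sum_list (sorted_entries D) = (\<Sum>i\<in>UNIV. D $ i)"
    "\<exists>\<beta>. bij_betw \<beta> {..<CARD('n)} (UNIV::'n set) \<and> (\<forall>k<CARD('n). D $ (\<beta> k) = sorted_entries D ! k)"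
proof -
  let ?L = "sorted_entries D"
  have mL: "mset ?L = image_mset (\<lambda>i. D $ i) (mset_set UNIV)"
    unfolding sorted_entries_def by (rule mset_sorted_list_of_multiset)
  show "sorted ?L" unfolding sorted_entries_def by (rule sorted_sorted_list_of_multiset)
  have "length ?L = size (mset ?L)" by simp
  also have "\<dots> = CARD('n)" unfolding mL by simp
  finally show len: "length ?L = CARD('n)" .
  have "sum_list ?L = sum_mset (mset ?L)" by (simp add: sum_mset_sum_list)
  also have "\<dots> = (\<Sum>i\<in>UNIV. D $ i)" unfolding mL by (simp add: sum_unfold_sum_mset)
  finally show "sum_list ?L = (\<Sum>i\<in>UNIV. D $ i)" .
  obtain es :: "'n list" where es: "set es = UNIV" "distinct es" using finite_distinct_list[of "UNIV :: 'n set"] by auto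
  have les: "length es = CARD('n)" using es distinct_card by fastforce
  have "mset (map (\<lambda>i. D $ i) es) = image_mset (\<lambda>i. D $ i) (mset_set UNIV)"
    using es by (simp add: mset_set_set[symmetric])
  then have "mset ?L = mset (map (\<lambda>i. D $ i) es)" using mL by simp
  then obtain p where p: "p permutes {..<length (map (\<lambda>i. D $ i) es)}" "permute_list p (map (\<lambda>i. D $ i) es) = ?L"
    by (rule mset_eq_permutation)
  have p': "p permutes {..<CARD('n)}" using p(1) les by simp
  define \<beta> where "\<beta> = (\<lambda>k. es ! k) \<circ> p"
  have "bij_betw \<beta> {..<CARD('n)} UNIV"
    unfolding \<beta>_def
    by (rule bij_betw_trans[OF permutes_imp_bij[OF p']]) (rule bij_betw_nth, use es les in auto)
  moreover have "D $ (\<beta> k) = ?L ! k" if "k < CARD('n)" for k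
  proof -
    have "?L ! k = permute_list p (map (\<lambda>i. D $ i) es) ! k" using p(2) by simp
    also have "\<dots> = map (\<lambda>i. D $ i) es ! p k" using p(1) that les by (simp add: permute_list_nth)
    also have "\<dots> = D $ (\<beta> k)" using permutes_in_image[OF p'] that les by (simp add: \<beta>_def)
    finally show ?thesis by simp
  qed
  ultimately show "\<exists>\<beta>. bij_betw \<beta> {..<CARD('n)} (UNIV::'n set) \<and> (\<forall>k<CARD('n). D $ (\<beta> k) = ?L ! k)"
    by blast
qed

lemma sorted_prefix_le:
  fixes L :: "real list"
  assumes srt: "sorted L" and K: "K \<subseteq> {..<length L}"
  shows "(\<Sum>k<card K. L ! k) \<le> (\<Sum>k\<in>K. L ! k)"
proof -
  define m where "m = card K"
  have fK: "finite K" using K finite_subset by blast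
  show ?thesis
  proof (cases "m = 0")
    case True
    then have "K = {}" using fK unfolding m_def by simp
    then show ?thesis by simp
  next
    case False
    have mle: "m \<le> length L" unfolding m_def using card_mono[OF _ K] by simp
    define A where "A = K - {..<m}"
    define B where "B = {..<m} - K"
    have s1: "(\<Sum>k\<in>K. L ! k) = (\<Sum>k\<in>K \<inter> {..<m}. L ! k) + (\<Sum>k\<in>A. L ! k)"
      unfolding A_def using fK by (rule sum.Int_Diff)
    have s2: "(\<Sum>k<m. L ! k) = (\<Sum>k\<in>{..<m} \<inter> K. L ! k) + (\<Sum>k\<in>B. L ! k)"
      unfolding B_def by (rule sum.Int_Diff) simp
    have c1: "card K = card (K \<inter> {..<m}) + card A"
      unfolding A_def using fK by (metis card_Int_Diff finite_lessThan)
    have c2: "m = card ({..<m} \<inter> K) + card B"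
      unfolding B_def by (metis card_Int_Diff card_lessThan finite_lessThan)
    have cAB: "card A = card B" using c1 c2 unfolding m_def by (simp add: Int_commute)
    define t where "t = L ! (m - 1)"
    have "(\<Sum>k\<in>B. L ! k) \<le> of_nat (card B) * t"
      by (rule sum_bounded_above) (use srt mle False in \<open>auto simp: B_def t_def intro!: sorted_nth_mono\<close>)
    also have "\<dots> = of_nat (card A) * t" using cAB by simp
    also have "\<dots> \<le> (\<Sum>k\<in>A. L ! k)"
      by (rule sum_bounded_below) (use srt K False in \<open>auto simp: A_def t_def intro!: sorted_nth_mono\<close>)
    finally show ?thesis using s1 s2 unfolding m_def by (simp add: Int_commute)
  qed
qed

lemma sum_list_take_nth: "k \<le> length L \<Longrightarrow> sum_list (take k L) = (\<Sum>i<k. L ! i)"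
  by (simp add: sum_list_sum_nth atLeast0LessThan min_def)

lemma majorized_to_sets:
  fixes DA DB :: "real ^ ('n::finite)"
  assumes maj: "majorized (sorted_entries DA) (sorted_entries DB)"
  shows "\<forall>U. \<exists>V. card V = card U \<and> (\<Sum>i\<in>V. DB $ i) \<le> (\<Sum>i\<in>U. DA $ i)"
    and "(\<Sum>i\<in>UNIV. DB $ i) = (\<Sum>i\<in>UNIV. DA $ i)"
proof -
  let ?LA = "sorted_entries DA" and ?LB = "sorted_entries DB"
  note pA = sorted_entries_props[of DA] and pB = sorted_entries_props[of DB]
  have mj: "sum_list (take k ?LB) \<le> sum_list (take k ?LA)" if "1 \<le> k" "k \<le> CARD('n)" for k
    using maj that pA(1,2) pB(1) unfolding majorized_def by (simp add: sorted_sort_id)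
  show "(\<Sum>i\<in>UNIV. DB $ i) = (\<Sum>i\<in>UNIV. DA $ i)"
    using maj pA(3) pB(3) unfolding majorized_def by simp
  obtain \<beta>A where bA: "bij_betw \<beta>A {..<CARD('n)} (UNIV::'n set)" "\<forall>k<CARD('n). DA $ (\<beta>A k) = ?LA ! k"
    using pA(4) by blast
  obtain \<beta>B where bB: "bij_betw \<beta>B {..<CARD('n)} (UNIV::'n set)" "\<forall>k<CARD('n). DB $ (\<beta>B k) = ?LB ! k"
    using pB(4) by blast
  show "\<forall>U. \<exists>V. card V = card U \<and> (\<Sum>i\<in>V. DB $ i) \<le> (\<Sum>i\<in>U. DA $ i)"
  proof
    fix U :: "'n set"
    define m where "m = card U"
    show "\<exists>V. card V = card U \<and> (\<Sum>i\<in>V. DB $ i) \<le> (\<Sum>i\<in>U. DA $ i)"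
    proof (cases "m = 0")
      case True
      then have "U = {}" unfolding m_def by simp
      then show ?thesis by (intro exI[of _ "{}"]) simp
    next
      case False
      have mn: "m \<le> CARD('n)" unfolding m_def by (simp add: card_mono)
      define K where "K = {k\<in>{..<CARD('n)}. \<beta>A k \<in> U}"
      have bK: "bij_betw \<beta>A K U"
        by (rule bij_betw_subset[OF bA(1)]) (use bA(1) in \<open>auto simp: K_def bij_betw_def\<close>)
      have cK: "card K = m" unfolding m_def using bij_betw_same_card[OF bK] .
      have "(\<Sum>i\<in>U. DA $ i) = (\<Sum>k\<in>K. DA $ (\<beta>A k))" using sum.reindex_bij_betw[OF bK, of "\<lambda>i. DA $ i"] by simp
      also have "\<dots> = (\<Sum>k\<in>K. ?LA ! k)" using bA(2) by (intro sum.cong) (auto simp: K_def)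
      finally have e1: "(\<Sum>i\<in>U. DA $ i) = (\<Sum>k\<in>K. ?LA ! k)" .
      have "(\<Sum>k<m. ?LA ! k) \<le> (\<Sum>k\<in>K. ?LA ! k)"
        using sorted_prefix_le[OF pA(1), of K] pA(2) cK by (auto simp: K_def)
      moreover have "sum_list (take m ?LB) \<le> sum_list (take m ?LA)" using mj False mn by simp
      ultimately have le: "(\<Sum>k<m. ?LB ! k) \<le> (\<Sum>i\<in>U. DA $ i)"
        using e1 mn pA(2) pB(2) by (simp add: sum_list_take_nth)
      define V where "V = \<beta>B ` {..<m}"
      have bV: "bij_betw \<beta>B {..<m} V"
        unfolding V_def by (rule bij_betw_subset[OF bB(1)]) (use mn in auto)
      have "(\<Sum>i\<in>V. DB $ i) = (\<Sum>k<m. DB $ (\<beta>B k))" using sum.reindex_bij_betw[OF bV, of "\<lambda>i. DB $ i"] by simp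
      also have "\<dots> = (\<Sum>k<m. ?LB ! k)" using bB(2) mn by (intro sum.cong) auto
      finally have "(\<Sum>i\<in>V. DB $ i) \<le> (\<Sum>i\<in>U. DA $ i)" using le by simp
      moreover have "card V = card U" using bij_betw_same_card[OF bV] unfolding m_def by simp
      ultimately show ?thesis by blast
    qed
  qed
qed

lemma cl_univ:
  fixes x y c :: "('n::finite) \<Rightarrow> real"
  assumes maj: "\<forall>U. \<exists>V. card V = card U \<and> sum y V \<le> sum x U" and tot: "sum y UNIV = sum x UNIV"
  shows "\<exists>\<pi>. \<pi> permutes UNIV \<and> (\<Sum>i\<in>UNIV. c i * y (\<pi> i)) \<le> (\<Sum>i\<in>UNIV. c i * x i)"
proof -
  define m where "m = Min (range c)"
  define c' where "c' i = c i - m" for i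
  have c'0: "\<forall>i\<in>UNIV. 0 \<le> c' i" unfolding c'_def m_def by simp
  obtain \<pi> where \<pi>: "bij_betw \<pi> UNIV UNIV" "(\<Sum>i\<in>UNIV. c' i * y (\<pi> i)) \<le> (\<Sum>i\<in>UNIV. c' i * x i)"
    using cl_core[of UNIV UNIV y x c'] maj c'0 by auto
  have perm: "\<pi> permutes UNIV" by (rule bij_imp_permutes[OF \<pi>(1)]) simp
  have r: "(\<Sum>i\<in>UNIV. y (\<pi> i)) = sum y UNIV" using sum.reindex_bij_betw[OF \<pi>(1), of y] by simp
  have "(\<Sum>i\<in>UNIV. c i * y (\<pi> i)) = (\<Sum>i\<in>UNIV. c' i * y (\<pi> i)) + m * (\<Sum>i\<in>UNIV. y (\<pi> i))"
    unfolding c'_def by (simp add: algebra_simps sum.distrib sum_distrib_left sum_subtractf)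
  also have "\<dots> \<le> (\<Sum>i\<in>UNIV. c' i * x i) + m * sum x UNIV" using \<pi>(2) r tot by simp
  also have "\<dots> = (\<Sum>i\<in>UNIV. c i * x i)"
    unfolding c'_def by (simp add: algebra_simps sum.distrib sum_distrib_left sum_subtractf)
  finally show ?thesis using perm by blast
qed

lemma maj_hull:
  fixes x y :: "('n::finite) \<Rightarrow> real"
  assumes maj: "\<forall>U. \<exists>V. card V = card U \<and> sum y V \<le> sum x U" and tot: "sum y UNIV = sum x UNIV"
  shows "(\<chi> i. x i) \<in> convex hull ((\<lambda>\<pi>. \<chi> i. y (\<pi> i)) ` {\<pi>. \<pi> permutes (UNIV::'n set)})"
proof (rule ccontr)
  let ?P = "(\<lambda>\<pi>. \<chi> i. y (\<pi> i)) ` {\<pi>. \<pi> permutes (UNIV::'n set)}"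
  assume nin: "(\<chi> i. x i) \<notin> convex hull ?P"
  have "finite ?P" using finite_permutations[of "UNIV :: 'n set"] by simp
  then have "compact (convex hull ?P)" by (rule finite_imp_compact_convex_hull)
  then obtain a b where ab: "a \<bullet> (\<chi> i. x i) < b" "\<forall>z\<in>convex hull ?P. b < a \<bullet> z"
    using separating_hyperplane_closed_point[OF convex_convex_hull compact_imp_closed nin] by blast
  obtain \<pi> where \<pi>: "\<pi> permutes UNIV" "(\<Sum>i\<in>UNIV. a $ i * y (\<pi> i)) \<le> (\<Sum>i\<in>UNIV. a $ i * x i)"
    using cl_univ[OF maj tot, of "\<lambda>i. a $ i"] by blast
  have "(\<chi> i. y (\<pi> i)) \<in> convex hull ?P" using \<pi>(1) by (intro hull_inc) auto
  then have "b < a \<bullet> (\<chi> i. y (\<pi> i))" using ab(2) by blast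
  also have "a \<bullet> (\<chi> i. y (\<pi> i)) = (\<Sum>i\<in>UNIV. a $ i * y (\<pi> i))" by (simp add: inner_vec_def)
  also have "\<dots> \<le> a \<bullet> (\<chi> i. x i)" using \<pi>(2) by (simp add: inner_vec_def)
  finally show False using ab(1) by simp
qed

lemma hull_weights:
  assumes fI: "finite I" and v: "v \<in> convex hull (g ` I)"
  shows "\<exists>p. (\<forall>i\<in>I. 0 \<le> p i) \<and> sum p I = 1 \<and> v = (\<Sum>i\<in>I. p i *\<^sub>R g i)"
proof -
  have "I \<noteq> {}" using v by auto
  have eq: "g ` I = \<Union> ((\<lambda>i. {g i}) ` I)" by auto
  have "v \<in> {\<Sum>i\<in>I. c i *\<^sub>R s i |c s. (\<forall>i\<in>I. 0 \<le> c i) \<and> sum c I = 1 \<and> (\<forall>i\<in>I. s i \<in> {g i})}"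
    using v unfolding eq by (subst (asm) convex_hull_finite_union[OF fI]) auto
  then obtain c s where cs: "v = (\<Sum>i\<in>I. c i *\<^sub>R s i)" "\<forall>i\<in>I. 0 \<le> c i" "sum c I = 1" "\<forall>i\<in>I. s i = g i"
    by blast
  have "v = (\<Sum>i\<in>I. c i *\<^sub>R g i)" using cs(1,4) by simp
  then show ?thesis using cs(2,3) by blast
qed

definition liftp :: "('n \<Rightarrow> 'n) \<Rightarrow> 'n + 'n \<Rightarrow> 'n + 'n" where
  "liftp \<pi> a = (case a of Inl i \<Rightarrow> Inl (\<pi> i) | Inr i \<Rightarrow> Inr (\<pi> i))"

definition pmat :: "(('n::finite) \<Rightarrow> 'n) \<Rightarrow> 'n sqmat" where
  "pmat \<pi> = (\<chi> a b. if a = liftp \<pi> b then 1 else 0)"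

lemma pmat_congr: "(transpose (pmat \<pi>) ** X ** pmat \<pi>) $ a $ b = X $ liftp \<pi> a $ liftp \<pi> b"
proof -
  have col: "column c (pmat \<pi>) = axis (liftp \<pi> c) 1" for c
    by (simp add: vec_eq_iff column_def pmat_def axis_def)
  show ?thesis unfolding congr_entry col matrix_vector_mult_basis
    by (simp add: inner_commute[of "axis _ _"] inner_axis column_def)
qed

lemma liftp_eq: "inj \<pi> \<Longrightarrow> liftp \<pi> a = liftp \<pi> b \<longleftrightarrow> a = b"
  by (auto simp: liftp_def inj_eq split: sum.splits)

lemma symplectic_pmat: assumes "\<pi> permutes UNIV" shows "symplectic (pmat \<pi>)"
proof -
  have inj: "inj \<pi>" using assms permutes_inj by blast
  have "J_mat $ liftp \<pi> a $ liftp \<pi> b = J_mat $ a $ b" for a b :: "'a + 'a"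
    using inj by (cases a; cases b) (auto simp: J_entry liftp_def inj_eq)
  then show ?thesis unfolding symplectic_def by (simp add: vec_eq_iff pmat_congr)
qed

lemma pmat_diag2: assumes "\<pi> permutes UNIV"
  shows "transpose (pmat \<pi>) ** diag2 D ** pmat \<pi> = diag2 (\<chi> i. D $ \<pi> i)"
proof -
  have inj: "inj \<pi>" using assms permutes_inj by blast
  have "diag2 D $ liftp \<pi> a $ liftp \<pi> b = diag2 (\<chi> i. D $ \<pi> i) $ a $ b" for a b :: "'a + 'a"
    using inj by (cases a; cases b) (auto simp: diag2_def liftp_def inj_eq)
  then show ?thesis by (simp add: vec_eq_iff pmat_congr)
qed

lemma diag2_add: "diag2 (a + b) = diag2 a + diag2 b"
  by (simp add: vec_eq_iff diag2_def split: sum.splits)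
lemma diag2_scale: "diag2 (c *\<^sub>R a) = c *\<^sub>R diag2 a"
  by (simp add: vec_eq_iff diag2_def split: sum.splits)
lemma diag2_zero: "diag2 0 = 0"
  by (simp add: vec_eq_iff diag2_def split: sum.splits)
lemma diag2_sum: "finite I \<Longrightarrow> diag2 (\<Sum>i\<in>I. f i) = (\<Sum>i\<in>I. diag2 (f i))"
  by (induct I rule: finite_induct) (auto simp: diag2_add diag2_zero)

lemma mat_add_rdistrib: "(B + C) ** A = B ** A + C ** (A::real^'m::finite^'k::finite)"
  by (simp add: vec_eq_iff matrix_matrix_mult_def sum.distrib algebra_simps)

lemma congr_lin: "finite I \<Longrightarrow>
  transpose X ** (\<Sum>i\<in>I. c i *\<^sub>R Y i) ** X = (\<Sum>i\<in>I. c i *\<^sub>R (transpose X ** Y i ** (X::real^'m::finite^'m)))"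
  by (induct I rule: finite_induct)
     (auto simp: matrix_add_ldistrib mat_add_rdistrib matrix_scalar_ac scalar_matrix_assoc)

theorem theorem3p1:
  fixes A B :: "('n::finite) sqmat"
  assumes "psd_sym A" and "psd_sym B"
    and "symplectic_subspace (kernel_mat A)" and "symplectic_subspace (kernel_mat B)"
    and "majorized (sympl_eigs A) (sympl_eigs B)"
  shows "(\<exists>(M :: ('n \<Rightarrow> 'n) \<Rightarrow> 'n sqmat) (p :: ('n \<Rightarrow> 'n) \<Rightarrow> real).
           (\<forall>\<pi>\<in>{\<pi>. \<pi> permutes (UNIV :: 'n set)}. symplectic (M \<pi>) \<and> 0 \<le> p \<pi>) \<and>
           (\<Sum>\<pi>\<in>{\<pi>. \<pi> permutes (UNIV :: 'n set)}. p \<pi>) = 1 \<and>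
           A = (\<Sum>\<pi>\<in>{\<pi>. \<pi> permutes (UNIV :: 'n set)}. p \<pi> *\<^sub>R (transpose (M \<pi>) ** B ** M \<pi>))) \<and>
         A \<in> convex hull {transpose M ** B ** M | M. symplectic M}"
proof -
  let ?P = "{\<pi>. \<pi> permutes (UNIV :: 'n set)}"
  have fP: "finite ?P" using finite_permutations[of "UNIV :: 'n set"] by simp
  obtain MA DA where wA: "symplectic MA" "\<forall>i. 0 \<le> DA $ i" "transpose MA ** A ** MA = diag2 DA"
    using williamson_exists[OF assms(1,3)] by blast
  obtain MB DB where wB: "symplectic MB" "\<forall>i. 0 \<le> DB $ i" "transpose MB ** B ** MB = diag2 DB"
    using williamson_exists[OF assms(2,4)] by blast
  have mj: "majorized (sorted_entries DA) (sorted_entries DB)"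
    using assms(5) sympl_eigs_eq[OF wA] sympl_eigs_eq[OF wB] by simp
  note ms = majorized_to_sets[OF mj]
  have "(\<chi> i. DA $ i) \<in> convex hull ((\<lambda>\<pi>. \<chi> i. DB $ (\<pi> i)) ` ?P)"
    by (rule maj_hull[of "\<lambda>i. DB $ i" "\<lambda>i. DA $ i"]) (use ms in auto)
  then have "DA \<in> convex hull ((\<lambda>\<pi>. \<chi> i. DB $ (\<pi> i)) ` ?P)" by simp
  then obtain p where p: "\<forall>\<pi>\<in>?P. 0 \<le> p \<pi>" "sum p ?P = 1" "DA = (\<Sum>\<pi>\<in>?P. p \<pi> *\<^sub>R (\<chi> i. DB $ (\<pi> i)))"
    using hull_weights[OF fP] by blast
  define M where "M \<pi> = MB ** pmat \<pi> ** sinv MA" for \<pi>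
  have symM: "symplectic (M \<pi>)" if "\<pi> \<in> ?P" for \<pi>
    unfolding M_def using that wA(1) wB(1)
    by (auto intro!: symplectic_mult symplectic_sinv symplectic_pmat)
  have "A = transpose (MA ** sinv MA) ** A ** (MA ** sinv MA)" by (simp add: sinv_right[OF wA(1)])
  also have "\<dots> = transpose (sinv MA) ** (transpose MA ** A ** MA) ** sinv MA"
    by (simp add: matrix_transpose_mul matrix_mul_assoc)
  also have "\<dots> = transpose (sinv MA) ** diag2 DA ** sinv MA" using wA(3) by simp
  also have "diag2 DA = (\<Sum>\<pi>\<in>?P. p \<pi> *\<^sub>R diag2 (\<chi> i. DB $ (\<pi> i)))"
    using p(3) fP by (simp add: diag2_sum diag2_scale)
  also have "\<dots> = (\<Sum>\<pi>\<in>?P. p \<pi> *\<^sub>R (transpose (pmat \<pi>) ** (transpose MB ** B ** MB) ** pmat \<pi>))"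
    by (rule sum.cong) (auto simp: wB(3) pmat_diag2)
  also have "transpose (sinv MA) ** \<dots> ** sinv MA
      = (\<Sum>\<pi>\<in>?P. p \<pi> *\<^sub>R (transpose (sinv MA) ** (transpose (pmat \<pi>) ** (transpose MB ** B ** MB) ** pmat \<pi>) ** sinv MA))"
    by (rule congr_lin[OF fP])
  also have "\<dots> = (\<Sum>\<pi>\<in>?P. p \<pi> *\<^sub>R (transpose (M \<pi>) ** B ** M \<pi>))"
    unfolding M_def by (simp add: matrix_transpose_mul matrix_mul_assoc)
  finally have Aeq: "A = (\<Sum>\<pi>\<in>?P. p \<pi> *\<^sub>R (transpose (M \<pi>) ** B ** M \<pi>))" .
  have "A \<in> convex hull {transpose M ** B ** M | M. symplectic M}"
    unfolding Aeq
    by (rule convex_sum[OF fP convex_convex_hull p(2)]) (use p(1) symM in \<open>auto intro!: hull_inc\<close>)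
  then show ?thesis using Aeq p(1,2) symM by blast
qed

end
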